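(* Let $q \ge 3$ be an integer and let $\overline{G}_q$ be the image in $\mathrm{PSL}(2,\mathbb{R})$ of the Hecke triangle group $G_q$. Consider elements of $\overline{G}_q$ of the form $S T^{n_1} S T^{n_2} \cdots S T^{n_k}$ with $k > 0$, where $n_j \neq 0$ for $1 \le j \le k$, the $n_j$ are not all of the same sign, and in the cyclically ordered sequence $n_1, \dots, n_k$ the maximum number of consecutive $1$'s or of consecutive $(-1)$'s is less than $q/2 - 2$. Two such elements are conjugate in $\overline{G}_q$ if and only if their defining sequences are cyclic permutations of each other.
   Context: $G_q \subset \mathrm{SL}(2,\mathbb{R})$ is generated by $S = \begin{pmatrix} 0 & -1 \\ 1 & 0 \end{pmatrix}$ and $T = T_q = \begin{pmatrix} 1 & \lambda_q \\ 0 & 1 \end{pmatrix}$ with $\lambda_q = 2\cos(\pi/q)$; $S$ and $T$ also denote their images in $\mathrm{PSL}(2,\mathbb{R})$. *)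

theory Defs
  imports "HOL-Analysis.Analysis"
begin

type_synonym mat2 = "real^2^2"

definition mat2 :: "real \<Rightarrow> real \<Rightarrow> real \<Rightarrow> real \<Rightarrow> mat2" where
  "mat2 a b c d = vector [vector [a, b], vector [c, d]]"

definition lambda_q :: "nat \<Rightarrow> real" where
  "lambda_q q = 2 * cos (pi / real q)"

definition S_mat :: mat2 where
  "S_mat = mat2 0 (-1) 1 0"

definition T_mat :: "nat \<Rightarrow> mat2" where
  "T_mat q = mat2 1 (lambda_q q) 0 1"

definition T_inv_mat :: "nat \<Rightarrow> mat2" where
  "T_inv_mat q = mat2 1 (- lambda_q q) 0 1"

primrec mpow :: "mat2 \<Rightarrow> nat \<Rightarrow> mat2" where
  "mpow A 0 = mat 1"
| "mpow A (Suc n) = A ** mpow A n"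

definition T_pow :: "nat \<Rightarrow> int \<Rightarrow> mat2" where
  "T_pow q n = (if n \<ge> 0 then mpow (T_mat q) (nat n) else mpow (T_inv_mat q) (nat (- n)))"

inductive_set hecke_group :: "nat \<Rightarrow> mat2 set" for q where
  id: "mat 1 \<in> hecke_group q"
| mS: "A \<in> hecke_group q \<Longrightarrow> S_mat ** A \<in> hecke_group q"
| mSi: "A \<in> hecke_group q \<Longrightarrow> matrix_inv S_mat ** A \<in> hecke_group q"
| mT: "A \<in> hecke_group q \<Longrightarrow> T_mat q ** A \<in> hecke_group q"
| mTi: "A \<in> hecke_group q \<Longrightarrow> matrix_inv (T_mat q) ** A \<in> hecke_group q"

primrec hecke_word :: "nat \<Rightarrow> int list \<Rightarrow> mat2" where
  "hecke_word q [] = mat 1"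
| "hecke_word q (n # ns) = S_mat ** T_pow q n ** hecke_word q ns"

text \<open>Conjugacy in the image of G_q in PSL(2,R): g A g^{-1} = +-B for some g in G_q.\<close>
definition conj_PSL :: "nat \<Rightarrow> mat2 \<Rightarrow> mat2 \<Rightarrow> bool" where
  "conj_PSL q A B \<longleftrightarrow>
     (\<exists>g\<in>hecke_group q. g ** A ** matrix_inv g = B \<or> g ** A ** matrix_inv g = - B)"

definition admissible :: "nat \<Rightarrow> int list \<Rightarrow> bool" where
  "admissible q ns \<longleftrightarrow>
     ns \<noteq> [] \<and> (\<forall>n\<in>set ns. n \<noteq> 0) \<and>
     (\<exists>a\<in>set ns. \<exists>b\<in>set ns. a > 0 \<and> b < 0) \<and>
     (\<forall>e\<in>{1, -1}. \<forall>i m. (\<forall>t<m. ns ! ((i + t) mod length ns) = e)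
         \<longrightarrow> real m < real q / 2 - 2)"

end

theory Submission
  imports Defs "HOL-Library.Sublist"
begin

lemma mat2_nth[simp]: "mat2 a b c d $ 1 $ 1 = a" "mat2 a b c d $ 1 $ 2 = b" "mat2 a b c d $ 2 $ 1 = c" "mat2 a b c d $ 2 $ 2 = d"
  by (simp_all add: mat2_def vector_2)
lemma mat2_eq_iff: "(M::mat2) = N \<longleftrightarrow> M$1$1 = N$1$1 \<and> M$1$2 = N$1$2 \<and> M$2$1 = N$2$1 \<and> M$2$2 = N$2$2"
  by (auto simp: vec_eq_iff forall_2)
lemma mat2_mult: "mat2 a b c d ** mat2 e f g h = mat2 (a*e+b*g) (a*f+b*h) (c*e+d*g) (c*f+d*h)"
  by (simp add: mat2_eq_iff matrix_matrix_mult_def sum_2)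
lemma mat1_mat2: "(mat 1 :: mat2) = mat2 1 0 0 1"
  by (simp add: mat2_eq_iff mat_def)
lemma neg_mat2: "- mat2 a b c d = mat2 (-a) (-b) (-c) (-d)"
  by (simp add: mat2_eq_iff)
lemma mat2_inj: "mat2 a b c d = mat2 a' b' c' d' \<longleftrightarrow> a = a' \<and> b = b' \<and> c = c' \<and> d = d'"
  by (simp add: mat2_eq_iff)
lemma mat2_expand: "(M::mat2) = mat2 (M$1$1) (M$1$2) (M$2$1) (M$2$2)"
  by (simp add: mat2_eq_iff)
lemma lneg: "(- A :: mat2) ** (B::mat2) = - (A ** B)"
  by (subst (1 2) mat2_expand[of A], subst (1 2) mat2_expand[of B]) (simp add: mat2_mult neg_mat2)
lemma rneg: "(A :: mat2) ** (- B::mat2) = - (A ** B)"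
  by (subst (1 2) mat2_expand[of A], subst (1 2) mat2_expand[of B]) (simp add: mat2_mult neg_mat2)

definition sim :: "mat2 \<Rightarrow> mat2 \<Rightarrow> bool" (infix "\<simeq>" 50) where
  "A \<simeq> B \<longleftrightarrow> A = B \<or> A = - B"

lemma sim_refl[simp]: "A \<simeq> A" by (simp add: sim_def)
lemma sim_sym: "A \<simeq> B \<Longrightarrow> B \<simeq> A" by (auto simp: sim_def)
lemma sim_trans[trans]: "A \<simeq> B \<Longrightarrow> B \<simeq> C \<Longrightarrow> A \<simeq> C" by (auto simp: sim_def)
lemma sim_neg[simp]: "A \<simeq> - B \<longleftrightarrow> A \<simeq> B" "- A \<simeq> B \<longleftrightarrow> A \<simeq> B" by (auto simp: sim_def)
lemma sim_multl: "A \<simeq> B \<Longrightarrow> C ** A \<simeq> C ** B" by (auto simp: sim_def rneg)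
lemma sim_multr: "A \<simeq> B \<Longrightarrow> A ** C \<simeq> B ** C" by (auto simp: sim_def lneg)
lemma sim_mult: "A \<simeq> B \<Longrightarrow> C \<simeq> D \<Longrightarrow> A ** C \<simeq> B ** D"
  by (meson sim_multl sim_multr sim_trans)
lemma sim_eq_trans[trans]: "A \<simeq> B \<Longrightarrow> B = C \<Longrightarrow> A \<simeq> C" "A = B \<Longrightarrow> B \<simeq> C \<Longrightarrow> A \<simeq> C" by auto

lemma mpow_add: "mpow A (m + n) = mpow A m ** mpow A n"
  by (induction m) (simp_all add: matrix_mul_assoc)
lemma mpow_Suc_right: "mpow A (Suc n) = mpow A n ** A"
  using mpow_add[of A n 1] by simp
lemma mpow_mult: "mpow A (m * n) = mpow (mpow A m) n"
  by (induction n) (simp_all add: mpow_add)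

lemma S_S: "S_mat ** S_mat = - mat 1"
  by (simp add: S_mat_def mat2_mult mat1_mat2 neg_mat2)

lemma matrix_inv_eq: "(A::mat2) ** B = mat 1 \<Longrightarrow> B ** A = mat 1 \<Longrightarrow> matrix_inv A = B"
  unfolding matrix_inv_def
  by (rule some_equality) (auto, metis matrix_mul_assoc matrix_mul_lid matrix_mul_rid)

lemma inv_S: "matrix_inv S_mat = - S_mat"
  by (rule matrix_inv_eq) (simp_all add: rneg lneg S_S)
lemma inv_T: "matrix_inv (T_mat q) = T_inv_mat q"
  by (rule matrix_inv_eq) (simp_all add: T_mat_def T_inv_mat_def mat2_mult mat1_mat2)

definition Um :: "nat \<Rightarrow> mat2" where "Um q = S_mat ** T_mat q"

definition sc :: "nat \<Rightarrow> real \<Rightarrow> real" where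
  "sc q x = sin (x * pi / q) / sin (pi / q)"

lemma Um_mat2: "Um q = mat2 0 (-1) 1 (lambda_q q)"
  by (simp add: Um_def S_mat_def T_mat_def mat2_mult)

locale hq = fixes q :: nat assumes q3: "3 \<le> q"
begin

lemma sin_pos: "sin (pi / q) > 0"
  using q3 by (intro sin_gt_zero) (auto simp: field_simps)

lemma sc_rec: "sc q (x + 1) = lambda_q q * sc q x - sc q (x - 1)"
proof -
  let ?t = "pi / q"
  have a: "(x + 1) * pi / q = x * pi / q + ?t" and b: "(x - 1) * pi / q = x * pi / q - ?t"
    by (simp_all add: add_divide_distrib[symmetric] diff_divide_distrib[symmetric] algebra_simps)
  show ?thesis using sin_pos
    unfolding sc_def lambda_q_def a b sin_add sin_diff
    by (simp add: field_simps)
qed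

lemma sc_m1: "sc q (-1) = -1" using sin_pos by (simp add: sc_def)
lemma sc_0: "sc q 0 = 0" by (simp add: sc_def)
lemma sc_1: "sc q 1 = 1" using sin_pos by (simp add: sc_def)

lemma Upow: "mpow (Um q) n = mat2 (- sc q (real n - 1)) (- sc q n) (sc q n) (sc q (real n + 1))"
proof (induction n)
  case 0
  then show ?case by (simp add: mat1_mat2 sc_m1 sc_0 sc_1)
next
  case (Suc n)
  have r1: "sc q (real n + 1) = lambda_q q * sc q n - sc q (real n - 1)" using sc_rec by simp
  have r2: "sc q (real n + 1 + 1) = lambda_q q * sc q (real n + 1) - sc q n" using sc_rec[of "real n + 1"] by simp
  show ?case using Suc r1 r2
    by (simp add: Um_mat2 mat2_mult mat2_inj add.commute)
qed

lemma Upow_q: "mpow (Um q) q = - mat 1"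
proof -
  have "sc q (real q - 1) = 1"
  proof -
    have "(real q - 1) * pi / q = pi - pi / q" using q3 by (simp add: field_simps)
    then show ?thesis using sin_pos by (simp add: sc_def)
  qed
  moreover have "sc q q = 0" using q3 by (simp add: sc_def)
  moreover have "sc q (real q + 1) = -1"
  proof -
    have "(real q + 1) * pi / q = pi / q + pi" using q3 by (simp add: field_simps)
    then show ?thesis using sin_pos by (simp add: sc_def sin_add)
  qed
  ultimately show ?thesis by (simp add: Upow mat1_mat2 neg_mat2)
qed

lemma sc_nonneg: "0 \<le> (k::real) \<Longrightarrow> k \<le> q \<Longrightarrow> sc q k \<ge> 0"
  unfolding sc_def using sin_pos q3
  by (intro divide_nonneg_pos sin_ge_zero) (auto simp: field_simps)

lemma sc_pos: "0 < (k::real) \<Longrightarrow> k < q \<Longrightarrow> sc q k > 0"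
  unfolding sc_def using sin_pos q3
  by (intro divide_pos_pos sin_gt_zero) (auto simp: field_simps)

end

fun alt :: "nat list \<Rightarrow> bool" where
  "alt [] = True" | "alt [x] = True" | "alt (x # y # r) = ((x = 0) \<noteq> (y = 0) \<and> alt (y # r))"

lemma alt_Cons: "alt (x # ys) \<longleftrightarrow> alt ys \<and> (ys \<noteq> [] \<longrightarrow> (x = 0) \<noteq> (hd ys = 0))"
  by (cases ys) auto

lemma alt_append: "alt (xs @ ys) \<longleftrightarrow> alt xs \<and> alt ys \<and> (xs \<noteq> [] \<longrightarrow> ys \<noteq> [] \<longrightarrow> (last xs = 0) \<noteq> (hd ys = 0))"
  by (induction xs) (auto simp: alt_Cons)

lemma alt_rev: "alt (rev xs) = alt xs"
  by (induction xs) (auto simp: alt_Cons alt_append hd_rev last_rev)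

context hq begin

definition Lt :: "nat \<Rightarrow> mat2" where "Lt a = (if a = 0 then S_mat else mpow (Um q) a)"

fun ev :: "nat list \<Rightarrow> mat2" where
  "ev [] = mat 1" | "ev (a # w) = Lt a ** ev w"

lemma ev_append: "ev (xs @ ys) = ev xs ** ev ys"
  by (induction xs) (simp_all add: matrix_mul_assoc)

definition linv :: "nat \<Rightarrow> nat" where "linv a = (if a = 0 then 0 else q - a)"
definition winv :: "nat list \<Rightarrow> nat list" where "winv w = rev (map linv w)"

definition red :: "nat list \<Rightarrow> bool" where "red w \<longleftrightarrow> alt w \<and> (\<forall>a\<in>set w. a < q)"

lemma linv_lt: "a < q \<Longrightarrow> linv a < q" using q3 by (simp add: linv_def)
lemma linv_0: "a < q \<Longrightarrow> linv a = 0 \<longleftrightarrow> a = 0" by (auto simp: linv_def)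
lemma linv_linv: "a < q \<Longrightarrow> linv (linv a) = a" by (auto simp: linv_def)

lemma alt_map_linv: "\<forall>a\<in>set w. a < q \<Longrightarrow> alt (map linv w) = alt w"
  by (induction w) (auto simp: alt_Cons linv_0 hd_map)

lemma red_winv: "red w \<Longrightarrow> red (winv w)"
  by (auto simp: red_def winv_def alt_rev alt_map_linv linv_lt)

lemma winv_winv: "\<forall>a\<in>set w. a < q \<Longrightarrow> winv (winv w) = w"
  by (induction w) (auto simp: winv_def linv_linv)

lemma red_Cons: "red (a # w) \<longleftrightarrow> a < q \<and> red w \<and> (w \<noteq> [] \<longrightarrow> (a = 0) \<noteq> (hd w = 0))"
  by (auto simp: red_def alt_Cons)

lemma red_append: "red (xs @ ys) \<longleftrightarrow> red xs \<and> red ys \<and> (xs \<noteq> [] \<longrightarrow> ys \<noteq> [] \<longrightarrow> (last xs = 0) \<noteq> (hd ys = 0))"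
  by (auto simp: red_def alt_append)

lemma mpow_negI: "mpow (- mat 1) k \<simeq> mat 1"
proof (induction k)
  case (Suc k)
  then show ?case by (simp add: lneg sim_def) (metis minus_minus)
qed simp

lemma Upow_mod: "mpow (Um q) n \<simeq> mpow (Um q) (n mod q)"
proof -
  have "mpow (Um q) n = mpow (Um q) (q * (n div q) + n mod q)" by simp
  also have "\<dots> = mpow (- mat 1) (n div q) ** mpow (Um q) (n mod q)"
    by (simp only: mpow_add mpow_mult Upow_q)
  also have "\<dots> \<simeq> mat 1 ** mpow (Um q) (n mod q)"
    by (rule sim_multr[OF mpow_negI])
  finally show ?thesis by simp
qed

lemma Upow_add_mod: "mpow (Um q) a ** mpow (Um q) b \<simeq> mpow (Um q) ((a + b) mod q)"
  by (metis Upow_mod mpow_add)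

lemma Upow_cong: "a mod q = b mod q \<Longrightarrow> mpow (Um q) a \<simeq> mpow (Um q) b"
  by (metis Upow_mod sim_sym sim_trans)

lemma Lt_inv1: "a < q \<Longrightarrow> Lt a ** Lt (linv a) \<simeq> mat 1"
  using Upow_q by (auto simp: Lt_def linv_def S_S mpow_add[symmetric])

lemma Lt_inv2: "a < q \<Longrightarrow> Lt (linv a) ** Lt a \<simeq> mat 1"
  using Upow_q by (auto simp: Lt_def linv_def S_S mpow_add[symmetric])

lemma sim_cancel_left: "X ** Y \<simeq> mat 1 \<Longrightarrow> Y ** A \<simeq> Y ** B \<Longrightarrow> A \<simeq> B"
proof -
  assume 1: "X ** Y \<simeq> mat 1" and 2: "Y ** A \<simeq> Y ** B"
  have "A \<simeq> (X ** Y) ** A" using sim_multr[OF 1, of A] by (simp add: sim_sym)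
  also have "\<dots> = X ** (Y ** A)" by (simp add: matrix_mul_assoc)
  also have "\<dots> \<simeq> X ** (Y ** B)" by (rule sim_multl[OF 2])
  also have "\<dots> = (X ** Y) ** B" by (simp add: matrix_mul_assoc)
  also have "\<dots> \<simeq> B" using sim_multr[OF 1, of B] by simp
  finally show ?thesis .
qed

lemma sim_cancel_right: "Y ** X \<simeq> mat 1 \<Longrightarrow> A ** Y \<simeq> B ** Y \<Longrightarrow> A \<simeq> B"
proof -
  assume 1: "Y ** X \<simeq> mat 1" and 2: "A ** Y \<simeq> B ** Y"
  have "A \<simeq> A ** (Y ** X)" using sim_multl[OF 1, of A] by (simp add: sim_sym)
  also have "\<dots> = (A ** Y) ** X" by (simp add: matrix_mul_assoc)
  also have "\<dots> \<simeq> (B ** Y) ** X" by (rule sim_multr[OF 2])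
  also have "\<dots> = B ** (Y ** X)" by (simp add: matrix_mul_assoc)
  also have "\<dots> \<simeq> B" using sim_multl[OF 1, of B] by simp
  finally show ?thesis .
qed

lemma ev_winv1: "\<forall>a\<in>set w. a < q \<Longrightarrow> ev (winv w) ** ev w \<simeq> mat 1"
proof (induction w)
  case (Cons a w)
  have "ev (winv (a # w)) ** ev (a # w) = ev (winv w) ** (Lt (linv a) ** Lt a) ** ev w"
    by (simp add: winv_def ev_append matrix_mul_assoc)
  also have "\<dots> \<simeq> ev (winv w) ** mat 1 ** ev w"
    using Cons by (intro sim_multr sim_multl Lt_inv2) auto
  also have "\<dots> \<simeq> mat 1" using Cons by simp
  finally show ?case .
qed (simp add: winv_def)

lemma ev_winv2: "\<forall>a\<in>set w. a < q \<Longrightarrow> ev w ** ev (winv w) \<simeq> mat 1"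
proof -
  assume a: "\<forall>a\<in>set w. a < q"
  then have "\<forall>a\<in>set (winv w). a < q" by (auto simp: winv_def linv_lt)
  from ev_winv1[OF this] show ?thesis using winv_winv[OF a] by simp
qed

lemma mv1: "((M::mat2) *v v) $ 1 = M$1$1 * v$1 + M$1$2 * v$2"
  by (simp add: matrix_vector_mult_def sum_2)
lemma mv2: "((M::mat2) *v v) $ 2 = M$2$1 * v$1 + M$2$2 * v$2"
  by (simp add: matrix_vector_mult_def sum_2)

lemma U_QP:
  assumes "0 < a" "a < q" "v$1 * v$2 > (0::real)"
  shows "(mpow (Um q) a *v v)$1 * (mpow (Um q) a *v v)$2 < 0"
proof -
  define s0 where "s0 = sc q (real a - 1)"
  define s1 where "s1 = sc q (real a)"
  define s2 where "s2 = sc q (real a + 1)"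
  have h0: "s0 \<ge> 0" unfolding s0_def using assms by (intro sc_nonneg) auto
  have h1: "s1 > 0" unfolding s1_def using assms by (intro sc_pos) auto
  have h2: "s2 \<ge> 0" unfolding s2_def using assms by (intro sc_nonneg) auto
  define x where "x = v$1"
  define y where "y = v$2"
  have e1: "(mpow (Um q) a *v v)$1 = - s0 * x - s1 * y"
    by (simp add: mv1 Upow s0_def s1_def x_def y_def)
  have e2: "(mpow (Um q) a *v v)$2 = s1 * x + s2 * y"
    by (simp add: mv2 Upow s2_def s1_def x_def y_def)
  have "x > 0 \<and> y > 0 \<or> x < 0 \<and> y < 0" using assms(3) unfolding x_def y_def
    by (simp add: zero_less_mult_iff)
  then show ?thesis
  proof
    assume "x > 0 \<and> y > 0"
    then have "s0 * x \<ge> 0" "s1 * y > 0" "s1 * x > 0" "s2 * y \<ge> 0" using h0 h1 h2 by auto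
    then have "- s0 * x - s1 * y < 0" "s1 * x + s2 * y > 0" by linarith+
    then show ?thesis unfolding e1 e2 by (simp add: mult_neg_pos)
  next
    assume "x < 0 \<and> y < 0"
    then have "s0 * x \<le> 0" "s1 * y < 0" "s1 * x < 0" "s2 * y \<le> 0" using h0 h1 h2
      by (auto simp: mult_nonneg_nonpos mult_pos_neg)
    then have "- s0 * x - s1 * y > 0" "s1 * x + s2 * y < 0" by linarith+
    then show ?thesis unfolding e1 e2 by (simp add: mult_pos_neg)
  qed
qed

lemma S_PQ: "v$1 * v$2 < (0::real) \<Longrightarrow> (S_mat *v v)$1 * (S_mat *v v)$2 > 0"
  by (simp add: mv1 mv2 S_mat_def mult.commute)

lemma pingpong:
  "red w \<Longrightarrow> w \<noteq> [] \<Longrightarrow> hd w \<noteq> 0 \<Longrightarrow> last w \<noteq> 0 \<Longrightarrow> v$1 * v$2 > (0::real)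
   \<Longrightarrow> (ev w *v v)$1 * (ev w *v v)$2 < 0"
proof (induction "length w" arbitrary: w rule: less_induct)
  case less
  then obtain a r where w: "w = a # r" by (cases w) auto
  have a: "a \<noteq> 0" "a < q" using less.prems w by (auto simp: red_def)
  show ?case
  proof (cases r)
    case Nil
    then show ?thesis using w a U_QP less.prems by (simp add: Lt_def)
  next
    case (Cons b r')
    have b: "b = 0" using less.prems w Cons a by (auto simp: red_def)
    have r': "r' \<noteq> []" using less.prems w Cons b by auto
    have "hd r' \<noteq> 0" using less.prems w Cons b r' by (cases r') (auto simp: red_def)
    moreover have "last r' \<noteq> 0" using less.prems w Cons r' by auto
    moreover have "red r'" using less.prems w Cons by (auto simp: red_Cons)
    ultimately have IH: "(ev r' *v v)$1 * (ev r' *v v)$2 < 0"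
      using less r' w Cons by auto
    have "ev w *v v = mpow (Um q) a *v (S_mat *v (ev r' *v v))"
      using w Cons b a by (simp add: Lt_def matrix_vector_mul_assoc)
    then show ?thesis using U_QP[OF _ a(2) S_PQ[OF IH]] a by simp
  qed
qed

lemma pp_notI:
  assumes "red w" "w \<noteq> []" "hd w \<noteq> 0" "last w \<noteq> 0"
  shows "\<not> ev w \<simeq> mat 1"
proof
  assume e: "ev w \<simeq> mat 1"
  define v :: "real^2" where "v = vector [1, 1]"
  have v: "v$1 * v$2 > 0" by (simp add: v_def)
  have "(ev w *v v)$1 * (ev w *v v)$2 < 0" using pingpong[OF assms v] .
  moreover have "(ev w *v v)$1 * (ev w *v v)$2 = 1" using e
    by (auto simp: sim_def mv1 mv2 v_def mat_def)
  ultimately show False by simp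
qed

end

lemma mod_ne0: "0 < (n::nat) \<Longrightarrow> n < 2 * q \<Longrightarrow> n \<noteq> q \<Longrightarrow> n mod q \<noteq> 0"
proof -
  assume a: "0 < n" "n < 2 * q" "n \<noteq> q"
  show ?thesis
  proof (cases "n < q")
    case True then show ?thesis using a by simp
  next
    case False
    then have "n mod q = n - q" using a le_mod_geq[of q n] by simp
    then show ?thesis using a False by simp
  qed
qed

lemma list_hd_mid_last: "2 \<le> length w \<Longrightarrow> \<exists>a m c. w = a # m @ [c]"
  by (cases w; cases "tl w" rule: rev_cases) auto

context hq begin

lemma red_Nil[simp]: "red []" by (simp add: red_def)

lemma red_mid: "red (a # m @ [c]) \<longleftrightarrow> a < q \<and> c < q \<and> red m \<and> (m = [] \<longrightarrow> (a = 0) \<noteq> (c = 0)) \<and>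
   (m \<noteq> [] \<longrightarrow> (a = 0) \<noteq> (hd m = 0) \<and> (last m = 0) \<noteq> (c = 0))"
  by (cases "m = []") (auto simp: red_Cons red_append hd_append)

lemma Lt_merge: "a \<noteq> 0 \<Longrightarrow> b \<noteq> 0 \<Longrightarrow> (a + b) mod q \<noteq> 0 \<Longrightarrow> Lt a ** Lt b \<simeq> Lt ((a + b) mod q)"
  by (simp add: Lt_def Upow_add_mod)

lemma S_not_I: "\<not> S_mat \<simeq> mat 1"
  by (simp add: sim_def S_mat_def mat1_mat2 neg_mat2 mat2_inj)

lemma c3:
  assumes "red w" "w \<noteq> []" "hd w = 0" "last w \<noteq> 0"
  shows "\<not> ev w \<simeq> mat 1"
proof
  assume e: "ev w \<simeq> mat 1"
  define p where "p = butlast w"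
  define c where "c = last w"
  have w: "w = p @ [c]" using assms by (simp add: p_def c_def)
  have c: "c \<noteq> 0" using assms by (simp add: c_def)
  have p: "p \<noteq> []" using assms w c by (cases p) auto
  have hp: "hd p = 0" using assms w p by simp
  have "red (p @ [c])" using assms(1) w by simp
  then have rp: "red p" "last p = 0" "c < q" using p c by (auto simp: red_append red_Cons)
  define b where "b = (if c = 1 then 2 else (1::nat))"
  have b: "b \<noteq> 0" "b < q" "b \<noteq> c" using q3 by (auto simp: b_def)
  have lb: "linv b \<noteq> 0" "linv b = q - b" using b by (auto simp: linv_def)
  define c' where "c' = (c + linv b) mod q"
  have c': "c' \<noteq> 0" "c' < q"
  proof -
    show "c' \<noteq> 0" unfolding c'_def lb(2) using b rp c by (intro mod_ne0) auto
    show "c' < q" using q3 by (simp add: c'_def)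
  qed
  define W2 where "W2 = b # p @ [c']"
  have rW2: "red W2" unfolding W2_def red_mid using rp b c' p hp by auto
  have "ev W2 = Lt b ** ev p ** Lt c'" by (simp add: W2_def ev_append matrix_mul_assoc)
  also have "\<dots> \<simeq> Lt b ** ev p ** (Lt c ** Lt (linv b))"
    using Lt_merge[OF c lb(1)] c'(1) unfolding c'_def
    by (intro sim_multl) (simp add: sim_sym)
  also have "\<dots> = Lt b ** ev w ** Lt (linv b)" using w by (simp add: ev_append matrix_mul_assoc)
  also have "\<dots> \<simeq> Lt b ** mat 1 ** Lt (linv b)" by (intro sim_multr sim_multl e)
  also have "\<dots> \<simeq> mat 1" using Lt_inv1[OF b(2)] by simp
  finally have "ev W2 \<simeq> mat 1" .
  moreover have "last W2 \<noteq> 0" using c' by (simp add: W2_def)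
  ultimately show False using pp_notI[OF rW2] b by (simp add: W2_def)
qed

lemma ev_I_nil:
  assumes "red w" "ev w \<simeq> mat 1"
  shows "w = []"
proof (rule ccontr)
  assume ne: "w \<noteq> []"
  consider "hd w \<noteq> 0" "last w \<noteq> 0" | "hd w = 0" "last w \<noteq> 0" | "hd w \<noteq> 0" "last w = 0"
    | "hd w = 0" "last w = 0" by blast
  then show False
  proof cases
    case 1 then show ?thesis using pp_notI assms ne by blast
  next
    case 2 then show ?thesis using c3 assms ne by blast
  next
    case 3
    have wq: "\<forall>a\<in>set w. a < q" using assms by (simp add: red_def)
    have "ev (winv w) \<simeq> ev (winv w) ** ev w" using sim_multl[OF assms(2), of "ev (winv w)"] by (simp add: sim_sym)
    also have "\<dots> \<simeq> mat 1" using ev_winv1[OF wq] .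
    finally have e: "ev (winv w) \<simeq> mat 1" .
    have "hd w < q" using wq ne hd_in_set by blast
    then have "linv (hd w) \<noteq> 0" using 3 by (simp add: linv_0)
    then have "hd (winv w) = 0" "last (winv w) \<noteq> 0" "winv w \<noteq> []"
      using 3 ne by (auto simp: winv_def hd_rev last_rev hd_map last_map linv_def)
    then show ?thesis using c3[OF red_winv[OF assms(1)]] e by blast
  next
    case 4
    show ?thesis
    proof (cases "w = [0]")
      case True then show ?thesis using assms S_not_I by (simp add: Lt_def)
    next
      case False
      have "2 \<le> length w" using False ne 4 by (cases w) (auto simp: Suc_le_eq)
      then obtain a m c where w: "w = a # m @ [c]" using list_hd_mid_last by blast
      have ac: "a = 0" "c = 0" using 4 w by auto
      have m: "m \<noteq> []" "hd m \<noteq> 0" "last m \<noteq> 0" "red m" using assms(1) w ac by (auto simp: red_mid)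
      have "ev m \<simeq> (S_mat ** S_mat) ** ev m ** (S_mat ** S_mat)" by (simp add: S_S lneg rneg)
      also have "\<dots> = S_mat ** ev w ** S_mat" using w ac by (simp add: ev_append matrix_mul_assoc Lt_def)
      also have "\<dots> \<simeq> S_mat ** mat 1 ** S_mat" by (intro sim_multr sim_multl assms(2))
      also have "\<dots> \<simeq> mat 1" by (simp add: S_S)
      finally show ?thesis using pp_notI[OF m(4) m(1-3)] by blast
    qed
  qed
qed

lemma faithful:
  "red A \<Longrightarrow> red B \<Longrightarrow> ev A \<simeq> ev B \<Longrightarrow> A = B"
proof (induction A arbitrary: B)
  case Nil
  then show ?case using ev_I_nil[of B] by (simp add: sim_sym)
next
  case (Cons a A')
  show ?case
  proof (cases B)
    case Nil
    then show ?thesis using ev_I_nil[of "a # A'"] Cons.prems by simp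
  next
    case (Cons b B')
    note B = this
    have aq: "a < q" "red A'" using Cons.prems by (auto simp: red_Cons)
    have bq: "b < q" "red B'" using Cons.prems B by (auto simp: red_Cons)
    show ?thesis
    proof (cases "a = b")
      case True
      have "ev A' \<simeq> ev B'"
        by (rule sim_cancel_left[OF Lt_inv2[OF aq(1)]]) (use Cons.prems B True in simp)
      then show ?thesis using Cons.IH aq bq B True by simp
    next
      case False
      have Bq: "\<forall>x\<in>set B. x < q" using Cons.prems by (simp add: red_def)
      have ev0: "ev (winv B @ a # A') \<simeq> mat 1"
      proof -
        have "ev (winv B @ a # A') = ev (winv B) ** ev (a # A')" by (simp add: ev_append)
        also have "\<dots> \<simeq> ev (winv B) ** ev B" by (intro sim_multl Cons.prems)
        also have "\<dots> \<simeq> mat 1" by (rule ev_winv1[OF Bq])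
        finally show ?thesis .
      qed
      have wB: "winv B = winv B' @ [linv b]" using B by (simp add: winv_def)
      show ?thesis
      proof (cases "(a = 0) = (b = 0)")
        case False
        have "last (winv B) = linv b" by (simp add: wB)
        then have "red (winv B @ a # A')" using red_winv[OF Cons.prems(2)] Cons.prems(1) False bq
          by (simp add: red_append linv_0)
        from ev_I_nil[OF this ev0] show ?thesis by simp
      next
        case True
        then have nz: "a \<noteq> 0" "b \<noteq> 0" using \<open>a \<noteq> b\<close> by auto
        define d where "d = (linv b + a) mod q"
        have lb: "linv b = q - b" "linv b \<noteq> 0" using nz bq by (auto simp: linv_def)
        have d: "d \<noteq> 0" "d < q"
        proof -
          have "q - b + a < 2 * q" "0 < q - b + a" "q - b + a \<noteq> q" using nz aq bq \<open>a \<noteq> b\<close> by auto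
          then show "d \<noteq> 0" unfolding d_def lb(1) by (intro mod_ne0) auto
          show "d < q" using q3 by (simp add: d_def)
        qed
        define Z where "Z = winv B' @ d # A'"
        have "ev Z = ev (winv B') ** Lt d ** ev A'" by (simp add: Z_def ev_append matrix_mul_assoc)
        also have "\<dots> \<simeq> ev (winv B') ** (Lt (linv b) ** Lt a) ** ev A'"
          using Lt_merge[OF lb(2) nz(1)] d(1) unfolding d_def
          by (intro sim_multr sim_multl) (simp add: sim_sym)
        also have "\<dots> = ev (winv B @ a # A')" by (simp add: wB ev_append matrix_mul_assoc)
        also have "\<dots> \<simeq> mat 1" by (rule ev0)
        finally have eZ: "ev Z \<simeq> mat 1" .
        have rZ: "red Z"
        proof -
          have h1: "B' \<noteq> [] \<Longrightarrow> hd B' = 0" using Cons.prems(2) B nz by (auto simp: red_Cons)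
          have h2: "A' \<noteq> [] \<Longrightarrow> hd A' = 0" using Cons.prems(1) nz by (auto simp: red_Cons)
          have h3: "red (winv B')" using red_winv bq by blast
          have h4: "winv B' \<noteq> [] \<Longrightarrow> last (winv B') = 0"
          proof -
            assume "winv B' \<noteq> []"
            then have "B' \<noteq> []" by (simp add: winv_def)
            then show ?thesis using h1 by (simp add: winv_def last_rev hd_map linv_def)
          qed
          have "red (d # A')" using h2 d aq(2) by (simp add: red_Cons)
          then show ?thesis unfolding Z_def red_append using h3 h4 d by simp
        qed
        from ev_I_nil[OF rZ eZ] have "Z = []" .
        then show ?thesis by (simp add: Z_def)
      qed
    qed
  qed
qed

end

context hq begin

definition CR :: "nat list \<Rightarrow> bool" where
  "CR W \<longleftrightarrow> red W \<and> 2 \<le> length W \<and> (hd W = 0) \<noteq> (last W = 0)"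

lemma NotCR:
  assumes x0: "red x0" "x0 = [] \<or> last x0 = 0"
    and V: "red V" "V \<noteq> []" "hd V \<noteq> 0" "last V \<noteq> 0"
    and W': "CR W'" and e: "ev x0 ** ev V \<simeq> ev W' ** ev x0"
  shows False
proof -
  have xq: "\<forall>a\<in>set x0. a < q" using x0 by (simp add: red_def)
  have hw: "x0 \<noteq> [] \<Longrightarrow> hd (winv x0) = 0" using x0 by (auto simp: winv_def hd_rev linv_def last_map)
  have r1: "red (V @ winv x0)" using V red_winv[OF x0(1)] hw
    by (auto simp: red_append winv_def)
  have r2: "red (x0 @ V @ winv x0)" using r1 x0 V by (auto simp: red_append)
  have "ev (x0 @ V @ winv x0) = (ev x0 ** ev V) ** ev (winv x0)" by (simp add: ev_append matrix_mul_assoc)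
  also have "\<dots> \<simeq> (ev W' ** ev x0) ** ev (winv x0)" by (rule sim_multr[OF e])
  also have "\<dots> = ev W' ** (ev x0 ** ev (winv x0))" by (simp add: matrix_mul_assoc)
  also have "\<dots> \<simeq> ev W' ** mat 1" by (intro sim_multl ev_winv2[OF xq])
  finally have "ev (x0 @ V @ winv x0) \<simeq> ev W'" by simp
  then have eq: "x0 @ V @ winv x0 = W'" using faithful r2 W' by (auto simp: CR_def)
  show False
  proof (cases "x0 = []")
    case True
    then show ?thesis using eq V W' by (auto simp: CR_def winv_def)
  next
    case False
    have "hd x0 < q" using xq False by simp
    then have "(linv (hd x0) = 0) = (hd x0 = 0)" by (simp add: linv_0)
    moreover have "hd W' = hd x0" "last W' = linv (hd x0)" using eq False V
      by (auto simp: winv_def last_rev hd_map)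
    ultimately show ?thesis using W' by (simp add: CR_def)
  qed
qed

lemma conj_step:
  assumes "Lt s ** ev W \<simeq> ev V ** Lt s" "s < q"
    and "ev (x0 @ [s]) ** ev W \<simeq> ev W' ** ev (x0 @ [s])"
  shows "ev x0 ** ev V \<simeq> ev W' ** ev x0"
proof (rule sim_cancel_right[OF Lt_inv1[OF assms(2)]])
  have "(ev x0 ** ev V) ** Lt s = ev x0 ** (ev V ** Lt s)" by (simp add: matrix_mul_assoc)
  also have "\<dots> \<simeq> ev x0 ** (Lt s ** ev W)" by (intro sim_multl sim_sym[OF assms(1)])
  also have "\<dots> = ev (x0 @ [s]) ** ev W" by (simp add: ev_append matrix_mul_assoc)
  also have "\<dots> \<simeq> ev W' ** ev (x0 @ [s])" by (rule assms(3))
  also have "\<dots> = (ev W' ** ev x0) ** Lt s" by (simp add: ev_append matrix_mul_assoc)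
  finally show "(ev x0 ** ev V) ** Lt s \<simeq> (ev W' ** ev x0) ** Lt s" .
qed

lemma conj_rot:
  "red x \<Longrightarrow> CR W \<Longrightarrow> CR W' \<Longrightarrow> ev x ** ev W \<simeq> ev W' ** ev x \<Longrightarrow> \<exists>r. W' = rotate r W"
proof (induction x arbitrary: W rule: rev_induct)
  case Nil
  then have "W = W'" using faithful by (auto simp: CR_def)
  then show ?case by (metis rotate0 id_apply)
next
  case (snoc s x0)
  have hx: "red x0" "s < q" "x0 \<noteq> [] \<Longrightarrow> (last x0 = 0) \<noteq> (s = 0)"
    using snoc.prems(1) by (auto simp: red_append red_Cons)
  have W: "red W" "2 \<le> length W" "(hd W = 0) \<noteq> (last W = 0)" using snoc.prems(2) by (auto simp: CR_def)
  obtain c t where ct: "W = c # t" using W by (cases W) auto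
  obtain m d where md: "W = m @ [d]" using W by (cases W rule: rev_cases) auto
  have t: "t \<noteq> []" using W ct by auto
  have m: "m \<noteq> []" using W md by auto
  have rt: "red t" and c: "c < q" and hdt: "(c = 0) \<noteq> (hd t = 0)" using W(1) ct t by (auto simp: red_Cons)
  have rm: "red m" and d: "d < q" and lm: "(last m = 0) \<noteq> (d = 0)" using W(1) md m by (auto simp: red_append red_Cons)
  have lt: "last t = d" using ct md t by (metis last_ConsR last_snoc)
  have hm: "hd m = c" using ct md m by (metis hd_append list.sel(1))
  have "hd W = c" using ct by simp
  moreover have "last W = d" using md by simp
  ultimately
  have cd: "(c = 0) \<noteq> (d = 0)" using W(3) by simp
  show ?case
  proof (cases "s = linv c")
    case True
    define V where "V = t @ [c]"
    have "Lt s ** ev W = (Lt (linv c) ** Lt c) ** ev t" using True ct by (simp add: matrix_mul_assoc)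
    also have "\<dots> \<simeq> mat 1 ** ev t" by (intro sim_multr Lt_inv2 c)
    also have "\<dots> \<simeq> ev t ** mat 1" by simp
    also have "\<dots> \<simeq> ev t ** (Lt c ** Lt (linv c))" by (intro sim_multl sim_sym[OF Lt_inv1] c)
    also have "\<dots> = ev V ** Lt s" using True by (simp add: V_def ev_append matrix_mul_assoc)
    finally have e: "Lt s ** ev W \<simeq> ev V ** Lt s" .
    have "CR V" using rt c lt cd hdt t W(2) ct unfolding CR_def V_def
      by (auto simp: red_append red_Cons)
    then obtain r where "W' = rotate r V" using snoc.IH[OF hx(1) _ snoc.prems(3) conj_step[OF e hx(2) snoc.prems(4)]] by blast
    moreover have "V = rotate 1 W" using ct by (simp add: V_def)
    ultimately show ?thesis by (metis rotate_rotate)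
  next
    case False
    note nlc = False
    show ?thesis
    proof (cases "s = d")
      case True
      define V where "V = d # m"
      have e: "Lt s ** ev W \<simeq> ev V ** Lt s" using True md by (simp add: V_def ev_append matrix_mul_assoc)
      have "CR V" using rm d hm lm cd m W(2) md unfolding CR_def V_def
        by (auto simp: red_Cons)
      then obtain r where "W' = rotate r V" using snoc.IH[OF hx(1) _ snoc.prems(3) conj_step[OF e hx(2) snoc.prems(4)]] by blast
      moreover have "V = rotate (length m) W" using md by (simp add: V_def rotate_append)
      ultimately show ?thesis by (metis rotate_rotate)
    next
      case False
      note nd = False
      show ?thesis
      proof (cases "(s = 0) = (c = 0)")
        case True
        have s0: "s \<noteq> 0" "c \<noteq> 0" "d = 0" using True nlc cd by (auto simp: linv_def)
        define e where "e = (s + c) mod q"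
        have e0: "e \<noteq> 0" "e < q"
        proof -
          show "e \<noteq> 0" unfolding e_def using s0 hx(2) c nlc by (intro mod_ne0) (auto simp: linv_def)
          show "e < q" using q3 by (simp add: e_def)
        qed
        have ls: "linv s \<noteq> 0" "linv s < q" using s0 hx(2) q3 by (auto simp: linv_def)
        define V where "V = e # t @ [linv s]"
        have "Lt s ** ev W = (Lt s ** Lt c) ** ev t" using ct by (simp add: matrix_mul_assoc)
        also have "\<dots> \<simeq> Lt e ** ev t" unfolding e_def using Lt_merge s0 e0 unfolding e_def
          by (intro sim_multr) auto
        also have "\<dots> \<simeq> (Lt e ** ev t) ** mat 1" by simp
        also have "\<dots> \<simeq> (Lt e ** ev t) ** (Lt (linv s) ** Lt s)" by (intro sim_multl sim_sym[OF Lt_inv2] hx(2))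
        also have "\<dots> = ev V ** Lt s" by (simp add: V_def ev_append matrix_mul_assoc)
        finally have ee: "Lt s ** ev W \<simeq> ev V ** Lt s" .
        have rV: "red V" unfolding V_def red_mid using e0 ls rt t hdt s0 lt by auto
        have "x0 = [] \<or> last x0 = 0" using hx(3) s0 by (cases "x0 = []") auto
        from NotCR[OF hx(1) this rV _ _ _ snoc.prems(3) conj_step[OF ee hx(2) snoc.prems(4)]] e0 ls
        show ?thesis by (simp add: V_def)
      next
        case False
        have s0: "s \<noteq> 0" "d \<noteq> 0" "c = 0" using False nd cd by auto
        define e where "e = (d + linv s) mod q"
        have ls: "linv s \<noteq> 0" "linv s < q" "linv s = q - s" using s0 hx(2) q3 by (auto simp: linv_def)
        have e0: "e \<noteq> 0" "e < q"
        proof -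
          show "e \<noteq> 0" unfolding e_def ls(3) using s0 hx(2) d nd by (intro mod_ne0) auto
          show "e < q" using q3 by (simp add: e_def)
        qed
        have es: "(e + s) mod q = d"
        proof -
          have "(e + s) mod q = (d + (q - s) + s) mod q" unfolding e_def ls(3) by (simp add: mod_add_left_eq)
          also have "\<dots> = (d + q) mod q" using hx(2) by simp
          also have "\<dots> = d" using d by simp
          finally show ?thesis .
        qed
        define V where "V = s # m @ [e]"
        have "ev V ** Lt s = Lt s ** ev m ** (Lt e ** Lt s)" by (simp add: V_def ev_append matrix_mul_assoc)
        also have "\<dots> \<simeq> Lt s ** ev m ** Lt d" using Lt_merge[of e s] e0 s0 es by (intro sim_multl) auto
        also have "\<dots> = Lt s ** ev W" using md by (simp add: ev_append matrix_mul_assoc)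
        finally have ee: "Lt s ** ev W \<simeq> ev V ** Lt s" by (rule sim_sym)
        have rV: "red V" unfolding V_def red_mid using e0 hx(2) rm m hm s0 lm by auto
        have "x0 = [] \<or> last x0 = 0" using hx(3) s0 by (cases "x0 = []") auto
        from NotCR[OF hx(1) this rV _ _ _ snoc.prems(3) conj_step[OF ee hx(2) snoc.prems(4)]] e0 s0
        show ?thesis by (simp add: V_def)
      qed
    qed
  qed
qed

end

lemma inv_props: "invertible (A::mat2) \<Longrightarrow> A ** matrix_inv A = mat 1 \<and> matrix_inv A ** A = mat 1"
  unfolding invertible_def matrix_inv_def by (rule someI_ex)

lemma T_Tinv: "T_mat q ** T_inv_mat q = mat 1" "T_inv_mat q ** T_mat q = mat 1"
  by (simp_all add: T_mat_def T_inv_mat_def mat2_mult mat1_mat2)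

lemma H_invertible: "A \<in> hecke_group q \<Longrightarrow> invertible A"
proof (induction rule: hecke_group.induct)
  case id
  then show ?case unfolding invertible_def by (intro exI[of _ "mat 1"]) simp
next
  case (mS A)
  have "invertible S_mat" unfolding invertible_def
    by (intro exI[of _ "- S_mat"]) (simp add: lneg rneg S_S)
  then show ?case using mS invertible_mult by blast
next
  case (mSi A)
  have "invertible (- S_mat)" unfolding invertible_def
    by (intro exI[of _ "S_mat"]) (simp add: lneg rneg S_S)
  then show ?case using mSi invertible_mult inv_S by metis
next
  case (mT A)
  have "invertible (T_mat q)" unfolding invertible_def
    by (intro exI[of _ "T_inv_mat q"]) (simp add: T_Tinv)
  then show ?case using mT invertible_mult by blast
next
  case (mTi A)
  have "invertible (T_inv_mat q)" unfolding invertible_def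
    by (intro exI[of _ "T_mat q"]) (simp add: T_Tinv)
  then show ?case using mTi invertible_mult inv_T by metis
qed

lemma H_mult: "A \<in> hecke_group q \<Longrightarrow> B \<in> hecke_group q \<Longrightarrow> A ** B \<in> hecke_group q"
proof (induction rule: hecke_group.induct)
  case id then show ?case by simp
next
  case (mS A) then show ?case by (simp add: matrix_mul_assoc[symmetric] hecke_group.mS)
next
  case (mSi A) then show ?case by (simp add: matrix_mul_assoc[symmetric] hecke_group.mSi)
next
  case (mT A) then show ?case by (simp add: matrix_mul_assoc[symmetric] hecke_group.mT)
next
  case (mTi A) then show ?case by (simp add: matrix_mul_assoc[symmetric] hecke_group.mTi)
qed

lemma S_H: "S_mat \<in> hecke_group q"
  using hecke_group.mS[OF hecke_group.id] by simp
lemma T_H: "T_mat q \<in> hecke_group q"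
  using hecke_group.mT[OF hecke_group.id] by simp
lemma Ti_H: "T_inv_mat q \<in> hecke_group q"
  using hecke_group.mTi[OF hecke_group.id, of q] by (simp add: inv_T)
lemma mpow_H: "A \<in> hecke_group q \<Longrightarrow> mpow A n \<in> hecke_group q"
  by (induction n) (auto intro: H_mult hecke_group.id)
lemma Tpow_H: "T_pow q n \<in> hecke_group q"
  by (simp add: T_pow_def mpow_H T_H Ti_H)
lemma hw_H: "hecke_word q ns \<in> hecke_group q"
  by (induction ns) (auto intro!: H_mult S_H Tpow_H hecke_group.id)

lemma hw_append: "hecke_word q (xs @ ys) = hecke_word q xs ** hecke_word q ys"
  by (induction xs) (simp_all add: matrix_mul_assoc[symmetric])

context hq begin

definition pushS :: "nat list \<Rightarrow> nat list" where
  "pushS w = (case w of [] \<Rightarrow> [0] | a # r \<Rightarrow> if a = 0 then r else 0 # a # r)"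

definition pushU :: "nat \<Rightarrow> nat list \<Rightarrow> nat list" where
  "pushU a w = (case w of [] \<Rightarrow> [a] | b # r \<Rightarrow> if b = 0 then a # b # r
      else if (a + b) mod q = 0 then r else ((a + b) mod q) # r)"

lemma pushS: "red w \<Longrightarrow> red (pushS w) \<and> ev (pushS w) \<simeq> S_mat ** ev w"
proof (cases w)
  case Nil
  assume "red w" then show ?thesis using Nil q3 by (simp add: pushS_def Lt_def red_Cons)
next
  case (Cons a r)
  assume rw: "red w"
  show ?thesis
  proof (cases "a = 0")
    case True
    have "S_mat ** ev w = - ev r" using Cons True by (simp add: Lt_def matrix_mul_assoc S_S lneg)
    then show ?thesis using Cons True rw by (simp add: pushS_def red_Cons sim_def)
  next
    case False
    then show ?thesis using Cons rw q3 by (simp add: pushS_def red_Cons Lt_def)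
  qed
qed

lemma pushU: "red w \<Longrightarrow> 0 < a \<Longrightarrow> a < q \<Longrightarrow> red (pushU a w) \<and> ev (pushU a w) \<simeq> mpow (Um q) a ** ev w"
proof (cases w)
  case Nil
  assume "red w" "0 < a" "a < q" then show ?thesis using Nil by (simp add: pushU_def Lt_def red_Cons)
next
  case (Cons b r)
  assume rw: "red w" and a: "0 < a" "a < q"
  have b: "b < q" "red r" using rw Cons by (auto simp: red_Cons)
  show ?thesis
  proof (cases "b = 0")
    case True
    then show ?thesis using Cons rw a by (simp add: pushU_def red_Cons Lt_def)
  next
    case False
    have hr: "r \<noteq> [] \<Longrightarrow> hd r = 0" using rw Cons False by (auto simp: red_Cons)
    have m: "mpow (Um q) a ** ev w \<simeq> mpow (Um q) ((a + b) mod q) ** ev r"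
      using Cons False Upow_add_mod[of a b] by (simp add: Lt_def matrix_mul_assoc sim_multr)
    show ?thesis
    proof (cases "(a + b) mod q = 0")
      case True
      then show ?thesis using m b Cons False by (simp add: pushU_def sim_sym)
    next
      case c: False
      have "red ((a + b) mod q # r)" using b hr c q3 by (auto simp: red_Cons)
      then show ?thesis using m Cons False c by (simp add: pushU_def Lt_def sim_sym)
    qed
  qed
qed

lemma T_sim: "T_mat q \<simeq> S_mat ** Um q"
proof -
  have "S_mat ** Um q = - T_mat q" by (simp add: Um_def matrix_mul_assoc S_S lneg)
  then show ?thesis by (simp add: sim_def)
qed

lemma Ti_sim: "T_inv_mat q \<simeq> Lt (q - 1) ** S_mat"
proof -
  have q1: "q = Suc (q - 1)" using q3 by simp
  have UV: "Um q ** (T_inv_mat q ** S_mat) = - mat 1"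
    by (simp add: Um_def S_mat_def T_mat_def T_inv_mat_def mat2_mult mat1_mat2 neg_mat2)
  have "mpow (Um q) (q - 1) = - (mpow (Um q) (q - 1) ** (Um q ** (T_inv_mat q ** S_mat)))"
    by (simp add: UV rneg)
  also have "\<dots> = - (mpow (Um q) q ** (T_inv_mat q ** S_mat))"
    by (subst (2) q1, simp only: mpow_Suc_right matrix_mul_assoc[symmetric])
  also have "\<dots> = T_inv_mat q ** S_mat" by (simp add: Upow_q lneg)
  finally have e: "Lt (q - 1) = T_inv_mat q ** S_mat" using q3 by (simp add: Lt_def)
  have "Lt (q - 1) ** S_mat = - T_inv_mat q" unfolding e by (simp add: matrix_mul_assoc[symmetric] S_S rneg)
  then show ?thesis by (simp add: sim_def)
qed

lemma H_word: "A \<in> hecke_group q \<Longrightarrow> \<exists>x. red x \<and> A \<simeq> ev x"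
proof (induction rule: hecke_group.induct)
  case id
  then show ?case by (intro exI[of _ "[]"]) simp
next
  case (mS A)
  then obtain x where x: "red x" "A \<simeq> ev x" by blast
  show ?case using pushS[OF x(1)] sim_multl[OF x(2), of S_mat] by (meson sim_sym sim_trans)
next
  case (mSi A)
  then obtain x where x: "red x" "A \<simeq> ev x" by blast
  show ?case using pushS[OF x(1)] sim_multl[OF x(2), of S_mat] unfolding inv_S
    by (simp add: lneg) (meson sim_sym sim_trans)
next
  case (mT A)
  then obtain x where x: "red x" "A \<simeq> ev x" by blast
  have q1: "0 < (1::nat)" "1 < q" using q3 by auto
  obtain y where y: "red y" "ev y \<simeq> mpow (Um q) 1 ** ev x" using pushU[OF x(1) q1] by blast
  obtain z where z: "red z" "ev z \<simeq> S_mat ** ev y" using pushS[OF y(1)] by blast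
  have "T_mat q ** A \<simeq> (S_mat ** Um q) ** ev x" by (intro sim_mult T_sim x(2))
  also have "\<dots> = S_mat ** (mpow (Um q) 1 ** ev x)" by (simp add: matrix_mul_assoc[symmetric])
  also have "\<dots> \<simeq> S_mat ** ev y" by (intro sim_multl sim_sym[OF y(2)])
  also have "\<dots> \<simeq> ev z" by (rule sim_sym[OF z(2)])
  finally show ?case using z by blast
next
  case (mTi A)
  then obtain x where x: "red x" "A \<simeq> ev x" by blast
  have q1: "0 < q - 1" "q - 1 < q" using q3 by auto
  obtain y where y: "red y" "ev y \<simeq> S_mat ** ev x" using pushS[OF x(1)] by blast
  obtain z where z: "red z" "ev z \<simeq> mpow (Um q) (q - 1) ** ev y" using pushU[OF y(1) q1] by blast
  have "matrix_inv (T_mat q) ** A \<simeq> (Lt (q - 1) ** S_mat) ** ev x" unfolding inv_T by (intro sim_mult Ti_sim x(2))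
  also have "\<dots> = mpow (Um q) (q - 1) ** (S_mat ** ev x)" using q3 by (simp add: matrix_mul_assoc[symmetric] Lt_def)
  also have "\<dots> \<simeq> mpow (Um q) (q - 1) ** ev y" by (intro sim_multl sim_sym[OF y(2)])
  also have "\<dots> \<simeq> ev z" by (rule sim_sym[OF z(2)])
  finally show ?case using z by blast
qed

end

definition sg :: "int \<Rightarrow> int" where "sg n = (if 0 < n then 1 else -1)"

fun fl :: "int \<Rightarrow> nat \<Rightarrow> int list" where
  "fl X 0 = [X]" | "fl X (Suc k) = X # 0 # fl X k"

definition fw :: "int \<Rightarrow> int list" where "fw n = fl (sg n) (nat \<bar>n\<bar> - 1)"

definition sep :: "int \<Rightarrow> int \<Rightarrow> int list" where
  "sep p n = (if (0 < p) = (0 < n) then [] else [0])"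

fun lw :: "int \<Rightarrow> int list \<Rightarrow> int list" where
  "lw p [] = []" | "lw p (n # r) = sep p n @ fw n @ lw n r"

definition LW :: "int list \<Rightarrow> int list" where "LW ns = lw (last ns) ns"

lemma SS_left: "S_mat ** (S_mat ** X) \<simeq> X"
  by (simp add: matrix_mul_assoc S_S lneg)
lemma SS_right: "(X ** S_mat) ** S_mat \<simeq> X"
  by (simp add: matrix_mul_assoc[symmetric] S_S rneg)

context hq begin

definition lt :: "int \<Rightarrow> mat2" where
  "lt x = (if x = 0 then S_mat else if 0 < x then Um q else mpow (Um q) (q - 1))"

fun evL :: "int list \<Rightarrow> mat2" where
  "evL [] = mat 1" | "evL (x # r) = lt x ** evL r"

lemma evL_append: "evL (xs @ ys) = evL xs ** evL ys"
  by (induction xs) (simp_all add: matrix_mul_assoc)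

definition E :: "int \<Rightarrow> mat2" where "E p = (if 0 < p then mat 1 else S_mat)"

lemma Tpos: "mpow (T_mat q) (Suc k) \<simeq> S_mat ** evL (fl 1 k)"
proof (induction k)
  case 0
  then show ?case using T_sim by (simp add: lt_def)
next
  case (Suc k)
  have "mpow (T_mat q) (Suc (Suc k)) = T_mat q ** mpow (T_mat q) (Suc k)" by simp
  also have "\<dots> \<simeq> (S_mat ** Um q) ** (S_mat ** evL (fl 1 k))" by (intro sim_mult T_sim Suc)
  also have "\<dots> = S_mat ** evL (fl 1 (Suc k))" by (simp add: lt_def matrix_mul_assoc)
  finally show ?case .
qed

lemma Tneg: "mpow (T_inv_mat q) (Suc k) \<simeq> evL (fl (-1) k) ** S_mat"
proof (induction k)
  case 0
  then show ?case using Ti_sim q3 by (simp add: lt_def Lt_def)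
next
  case (Suc k)
  have "mpow (T_inv_mat q) (Suc (Suc k)) = T_inv_mat q ** mpow (T_inv_mat q) (Suc k)" by simp
  also have "\<dots> \<simeq> (Lt (q - 1) ** S_mat) ** (evL (fl (-1) k) ** S_mat)" by (intro sim_mult Ti_sim Suc)
  also have "\<dots> = evL (fl (-1) (Suc k)) ** S_mat" using q3 by (simp add: lt_def Lt_def matrix_mul_assoc)
  finally show ?case .
qed

lemma ST_pos: "0 < n \<Longrightarrow> S_mat ** T_pow q n \<simeq> evL (fw n)"
proof -
  assume n: "0 < n"
  have a: "nat n = Suc (nat n - 1)" using n by simp
  have "S_mat ** T_pow q n = S_mat ** mpow (T_mat q) (Suc (nat n - 1))" using n a by (simp add: T_pow_def)
  also have "\<dots> \<simeq> S_mat ** (S_mat ** evL (fl 1 (nat n - 1)))" by (intro sim_multl Tpos)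
  also have "\<dots> \<simeq> evL (fl 1 (nat n - 1))" by (rule SS_left)
  finally show ?thesis using n by (simp add: fw_def sg_def)
qed

lemma ST_neg: "n < 0 \<Longrightarrow> S_mat ** T_pow q n \<simeq> S_mat ** evL (fw n) ** S_mat"
proof -
  assume n: "n < 0"
  have a: "nat (- n) = Suc (nat (- n) - 1)" using n by simp
  have "S_mat ** T_pow q n = S_mat ** mpow (T_inv_mat q) (Suc (nat (- n) - 1))" using n a by (simp add: T_pow_def)
  also have "\<dots> \<simeq> S_mat ** (evL (fl (-1) (nat (- n) - 1)) ** S_mat)" by (intro sim_multl Tneg)
  finally show ?thesis using n by (simp add: fw_def sg_def matrix_mul_assoc)
qed

lemma EE: "E p ** E p \<simeq> mat 1"
  by (simp add: E_def S_S)

lemma key_step: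
  assumes "n \<noteq> 0"
  shows "evL (sep p n) ** evL (fw n) ** E n \<simeq> E p ** (S_mat ** T_pow q n)"
proof (cases "0 < n")
  case True
  note n = this
  show ?thesis
  proof (cases "0 < p")
    case True
    then show ?thesis using n sim_sym[OF ST_pos[OF n]] by (simp add: sep_def E_def)
  next
    case False
    have "S_mat ** evL (fw n) \<simeq> S_mat ** (S_mat ** T_pow q n)" by (intro sim_multl sim_sym[OF ST_pos] n)
    then show ?thesis using n False by (simp add: sep_def E_def lt_def)
  qed
next
  case False
  then have n: "n < 0" using assms by simp
  show ?thesis
  proof (cases "0 < p")
    case True
    then show ?thesis using ST_neg[OF n] n by (simp add: sep_def E_def lt_def matrix_mul_assoc sim_sym)
  next
    case False
    have "S_mat ** (S_mat ** T_pow q n) \<simeq> S_mat ** (S_mat ** evL (fw n) ** S_mat)"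
      by (intro sim_multl ST_neg n)
    also have "\<dots> = (S_mat ** (S_mat ** evL (fw n))) ** S_mat" by (simp add: matrix_mul_assoc)
    also have "\<dots> \<simeq> evL (fw n) ** S_mat" by (intro sim_multr SS_left)
    finally show ?thesis using False n by (simp add: sep_def E_def sim_sym)
  qed
qed

lemma lw_ev: "\<forall>n\<in>set ns. n \<noteq> 0 \<Longrightarrow> evL (lw p ns) \<simeq> E p ** hecke_word q ns ** E (last (p # ns))"
proof (induction ns arbitrary: p)
  case Nil
  then show ?case using EE by (simp add: sim_sym)
next
  case (Cons n r)
  have IH: "evL (lw n r) \<simeq> E n ** hecke_word q r ** E (last (n # r))" using Cons by simp
  have "evL (lw p (n # r)) = evL (sep p n) ** evL (fw n) ** evL (lw n r)" by (simp add: evL_append matrix_mul_assoc)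
  also have "\<dots> \<simeq> evL (sep p n) ** evL (fw n) ** (E n ** hecke_word q r ** E (last (n # r)))"
    by (intro sim_multl IH)
  also have "\<dots> = (evL (sep p n) ** evL (fw n) ** E n) ** hecke_word q r ** E (last (n # r))"
    by (simp add: matrix_mul_assoc)
  also have "\<dots> \<simeq> (E p ** (S_mat ** T_pow q n)) ** hecke_word q r ** E (last (n # r))"
    using Cons.prems by (intro sim_multr key_step) simp
  also have "\<dots> = E p ** hecke_word q (n # r) ** E (last (p # n # r))" by (simp add: matrix_mul_assoc)
  finally show ?case .
qed

lemma LW_ev: "ns \<noteq> [] \<Longrightarrow> \<forall>n\<in>set ns. n \<noteq> 0 \<Longrightarrow> 0 < last ns \<Longrightarrow> evL (LW ns) \<simeq> hecke_word q ns"
  using lw_ev[of ns "last ns"] by (simp add: LW_def E_def)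

end

definition expand :: "int \<Rightarrow> int list" where
  "expand c = (if c = 0 then [0] else replicate (nat \<bar>c\<bar>) (sg c))"

fun ialt :: "int list \<Rightarrow> bool" where
  "ialt [] = True" | "ialt [x] = True" | "ialt (x # y # r) = ((x = 0) \<noteq> (y = 0) \<and> ialt (y # r))"

lemma ialt_Cons: "ialt (x # ys) \<longleftrightarrow> ialt ys \<and> (ys \<noteq> [] \<longrightarrow> (x = 0) \<noteq> (hd ys = 0))"
  by (cases ys) auto

definition ok :: "int \<Rightarrow> int \<Rightarrow> bool" where "ok x y \<longleftrightarrow> \<not> (x = 0 \<and> y = 0) \<and> x * y \<noteq> -1"

fun gd :: "int list \<Rightarrow> bool" where
  "gd [] = True" | "gd [x] = (x \<in> {-1, 0, 1})"
| "gd (x # y # r) = (x \<in> {-1, 0, 1} \<and> ok x y \<and> gd (y # r))"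

lemma gd_Cons: "gd (x # ys) \<longleftrightarrow> x \<in> {-1, 0, 1} \<and> gd ys \<and> (ys \<noteq> [] \<longrightarrow> ok x (hd ys))"
  by (cases ys) auto

lemma gd_append: "gd (xs @ ys) \<longleftrightarrow> gd xs \<and> gd ys \<and> (xs \<noteq> [] \<longrightarrow> ys \<noteq> [] \<longrightarrow> ok (last xs) (hd ys))"
  by (induction xs) (auto simp: gd_Cons)

lemma expand_step: "c \<noteq> 0 \<Longrightarrow> sg c = x \<Longrightarrow> expand (c + x) = x # expand c"
proof -
  assume c: "c \<noteq> 0" "sg c = x"
  show ?thesis
  proof (cases "0 < c")
    case True
    then have "x = 1" "nat \<bar>c + 1\<bar> = Suc (nat \<bar>c\<bar>)" using c by (auto simp: sg_def)
    then show ?thesis using True c by (simp add: expand_def sg_def)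
  next
    case False
    then have "x = -1" "nat \<bar>c - 1\<bar> = Suc (nat \<bar>c\<bar>)" "c < 0" using c by (auto simp: sg_def)
    then show ?thesis using c by (simp add: expand_def sg_def)
  qed
qed

lemma expand_letter: "x \<in> {-1, 0, 1} \<Longrightarrow> expand x = [x]"
  by (auto simp: expand_def sg_def)

lemma syl_exists:
  "gd L \<Longrightarrow> \<exists>S. concat (map expand S) = L \<and> ialt S \<and>
     (L \<noteq> [] \<longrightarrow> S \<noteq> [] \<and> (hd S = 0 \<longleftrightarrow> hd L = 0) \<and> (hd S \<noteq> 0 \<longrightarrow> sg (hd S) = hd L))"
proof (induction L rule: gd.induct)
  case 1
  then show ?case by (intro exI[of _ "[]"]) simp
next
  case (2 x)
  then show ?case by (intro exI[of _ "[x]"]) (auto simp: expand_letter sg_def)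
next
  case (3 x y r)
  then obtain S' where S': "concat (map expand S') = y # r" "ialt S'" "S' \<noteq> []"
    "hd S' = 0 \<longleftrightarrow> y = 0" "hd S' \<noteq> 0 \<Longrightarrow> sg (hd S') = y" by auto
  have x: "x \<in> {-1, 0, 1}" "ok x y" "y \<in> {-1,0,1}" using 3 by (auto simp: gd_Cons)
  obtain c T where cT: "S' = c # T" using S'(3) by (cases S') auto
  show ?case
  proof (cases "x = 0")
    case True
    then have "y \<noteq> 0" using x by (simp add: ok_def)
    moreover have "expand 0 = [0]" by (simp add: expand_def)
    ultimately show ?thesis using S' True cT by (intro exI[of _ "0 # S'"]) (auto simp: ialt_Cons)
  next
    case False
    note x0 = this
    show ?thesis
    proof (cases "y = 0")
      case True
      then show ?thesis using S' x0 x cT by (intro exI[of _ "x # S'"]) (auto simp: expand_letter ialt_Cons sg_def)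
    next
      case False
      have xy: "x = y" using x x0 False by (auto simp: ok_def)
      have c: "c \<noteq> 0" "sg c = x" using S' cT False xy by auto
      have e: "expand (c + x) = x # expand c" by (rule expand_step[OF c])
      have cx: "c + x \<noteq> 0" using c by (auto simp: sg_def split: if_splits)
      have "concat (map expand ((c + x) # T)) = x # y # r" using S'(1) cT e by simp
      moreover have "ialt ((c + x) # T)" using S'(2) cT c cx by (simp add: ialt_Cons)
      moreover have "sg (c + x) = x" using c by (auto simp: sg_def split: if_splits)
      ultimately show ?thesis using cx x0 by (intro exI[of _ "(c + x) # T"]) auto
    qed
  qed
qed

lemma hd_fl: "hd (fl X k) = X" by (cases k) auto
lemma fl_ne: "fl X k \<noteq> []" by (cases k) auto
lemma last_fl: "last (fl X k) = X" by (induction k) (auto simp: fl_ne)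
lemma gd_fl: "X \<in> {-1, 1} \<Longrightarrow> gd (fl X k)"
  by (induction k) (auto simp: gd_Cons ok_def hd_fl)

lemma sg_cases: "sg n \<in> {-1, 1}" by (simp add: sg_def)
lemma sg_ne0: "sg n \<noteq> 0" by (simp add: sg_def)

lemma hd_lw: "hd (lw p (n # r)) = (if (0 < p) = (0 < n) then sg n else 0)"
  by (simp add: sep_def fw_def hd_fl fl_ne)

lemma last_lw: "ns \<noteq> [] \<Longrightarrow> last (lw p ns) = sg (last ns)"
proof (induction ns arbitrary: p)
  case (Cons n r)
  then show ?case by (cases r) (auto simp: fw_def last_fl fl_ne)
qed simp

lemma lw_ne: "ns \<noteq> [] \<Longrightarrow> lw p ns \<noteq> []"
  by (cases ns) (auto simp: fw_def fl_ne)

lemma gd_lw: "\<forall>n\<in>set ns. n \<noteq> 0 \<Longrightarrow> gd (lw p ns)"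
proof (induction ns arbitrary: p)
  case (Cons n r)
  have g1: "gd (sep p n)" by (simp add: sep_def)
  have g2: "gd (fw n)" unfolding fw_def by (rule gd_fl[OF sg_cases])
  have g3: "gd (lw n r)" using Cons by simp
  have o1: "r \<noteq> [] \<Longrightarrow> ok (last (fw n)) (hd (lw n r))"
  proof -
    assume "r \<noteq> []"
    then obtain m r' where "r = m # r'" by (cases r) auto
    then show ?thesis using hd_lw[of n m r'] by (auto simp del: lw.simps simp: fw_def last_fl ok_def sg_def)
  qed
  have o2: "sep p n \<noteq> [] \<Longrightarrow> ok (last (sep p n)) (hd (fw n @ lw n r))"
    by (auto simp: sep_def fw_def hd_fl fl_ne ok_def sg_def split: if_splits)
  have "gd (fw n @ lw n r)" using g2 g3 o1 by (cases "r = []") (auto simp: gd_append)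
  then show ?case using g1 o2 by (simp add: gd_append fw_def fl_ne)
qed simp

context hq begin

definition phi :: "int \<Rightarrow> nat" where "phi c = nat (c mod int q)"

lemma evL_rep: "evL (replicate k x) = mpow (lt x) k"
  by (induction k) auto

lemma nat_mod_arith: "1 \<le> k \<Longrightarrow> k \<le> q \<Longrightarrow> ((q - 1) * k) mod q = (q - k) mod q"
proof -
  assume k: "1 \<le> k" "k \<le> q"
  have "int ((q - 1) * k) = int (q - k) + int q * int (k - 1)" using k q3
    by (simp add: of_nat_diff algebra_simps)
  then have "int ((q - 1) * k) = int ((q - k) + q * (k - 1))" by simp
  then have "(q - 1) * k = (q - k) + q * (k - 1)" by (simp only: int_int_eq)
  then show ?thesis by simp
qed

lemma Lt_phi: "\<bar>c\<bar> < int q \<Longrightarrow> Lt (phi c) \<simeq> evL (expand c)"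
proof -
  assume c: "\<bar>c\<bar> < int q"
  consider "c = 0" | "0 < c" | "c < 0" by linarith
  then show ?thesis
  proof cases
    case 1 then show ?thesis by (simp add: phi_def Lt_def expand_def lt_def)
  next
    case 2
    then have "phi c = nat c" "nat c \<noteq> 0" using c by (auto simp: phi_def)
    then show ?thesis using 2 by (simp add: Lt_def expand_def evL_rep lt_def sg_def)
  next
    case 3
    define k where "k = nat (- c)"
    have k: "1 \<le> k" "k < q" using 3 c by (auto simp: k_def)
    have "(c + int q) mod int q = c + int q" by (rule mod_pos_pos_trivial) (use 3 c in auto)
    then have "c mod int q = c + int q" by simp
    then have "phi c = q - k" using 3 k unfolding phi_def k_def by simp
    moreover have "q - k \<noteq> 0" using k by simp
    moreover have "evL (expand c) = mpow (Um q) ((q - 1) * k)"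
      using 3 by (simp add: expand_def evL_rep lt_def sg_def k_def mpow_mult)
    moreover have "mpow (Um q) ((q - 1) * k) \<simeq> mpow (Um q) (q - k)"
      by (rule Upow_cong) (use nat_mod_arith k in simp)
    ultimately show ?thesis by (simp add: Lt_def sim_sym)
  qed
qed

lemma ev_map_phi: "\<forall>c\<in>set S. \<bar>c\<bar> < int q \<Longrightarrow> ev (map phi S) \<simeq> evL (concat (map expand S))"
  by (induction S) (auto simp: evL_append intro!: sim_mult Lt_phi)

lemma phi_lt: "phi c < q" using q3 by (simp add: phi_def nat_less_iff)

lemma phi_0: "\<bar>c\<bar> < int q \<Longrightarrow> phi c = 0 \<longleftrightarrow> c = 0"
proof -
  assume c: "\<bar>c\<bar> < int q"
  have "c mod int q = 0 \<longleftrightarrow> c = 0"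
  proof
    assume "c mod int q = 0"
    then have "int q dvd c" by (simp add: dvd_eq_mod_eq_0)
    show "c = 0"
    proof (rule ccontr)
      assume "c \<noteq> 0"
      from dvd_imp_le_int[OF this \<open>int q dvd c\<close>] have "\<bar>int q\<bar> \<le> \<bar>c\<bar>" .
      then show False using c by simp
    qed
  qed simp
  moreover have "c mod int q \<ge> 0" using q3 by simp
  ultimately show ?thesis by (simp add: phi_def)
qed

lemma phi_inj: "2 * \<bar>c\<bar> < int q \<Longrightarrow> 2 * \<bar>c'\<bar> < int q \<Longrightarrow> phi c = phi c' \<Longrightarrow> c = c'"
proof -
  assume a: "2 * \<bar>c\<bar> < int q" "2 * \<bar>c'\<bar> < int q" "phi c = phi c'"
  have "0 \<le> c mod int q" "0 \<le> c' mod int q" using q3 by simp_all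
  then have "c mod int q = c' mod int q" using a(3) by (simp add: phi_def eq_nat_nat_iff)
  then have d: "int q dvd (c - c')" by (simp add: mod_eq_dvd_iff)
  have l: "\<bar>c - c'\<bar> < int q" using a by linarith
  show ?thesis
  proof (rule ccontr)
    assume "c \<noteq> c'" then have "c - c' \<noteq> 0" by simp
    from dvd_imp_le_int[OF this d] have "\<bar>int q\<bar> \<le> \<bar>c - c'\<bar>" .
    then show False using l by simp
  qed
qed

lemma alt_map_phi: "\<forall>c\<in>set S. \<bar>c\<bar> < int q \<Longrightarrow> ialt S \<Longrightarrow> alt (map phi S)"
  by (induction S) (auto simp: alt_Cons ialt_Cons hd_map phi_0)

end

lemma noXX_fl: "X \<noteq> 0 \<Longrightarrow> \<not> sublist [X, X] (fl Y k)"
proof (induction k)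
  case 0
  then show ?case by (auto simp: sublist_Cons_right)
next
  case (Suc k)
  then show ?case by (auto simp: sublist_Cons_right)
qed

lemma noXX_seg: "X \<noteq> 0 \<Longrightarrow> \<not> sublist [X, X] (sep p n @ fw n)"
  using noXX_fl[of X] by (auto simp: sep_def fw_def sublist_Cons_right)

lemma rep_sub2: "2 \<le> a \<Longrightarrow> sublist (replicate a X) ys \<Longrightarrow> sublist [X, X] ys"
proof -
  assume a: "2 \<le> a" "sublist (replicate a X) ys"
  have "replicate a X = replicate (2 + (a - 2)) X" using a(1) by (simp only: le_add_diff_inverse)
  also have "\<dots> = replicate 2 X @ replicate (a - 2) X" by (rule replicate_add)
  finally have "replicate a X = replicate 2 X @ replicate (a - 2) X" .
  then have "replicate a X = [X, X] @ replicate (a - 2) X" by (simp add: numeral_2_eq_2)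
  then have "sublist [X, X] (replicate a X)" using sublist_append_rightI by metis
  then show ?thesis using a(2) sublist_order.order_trans by blast
qed

lemma pre_rep: "a \<le> b \<Longrightarrow> prefix (replicate a X) (replicate b X)"
  using replicate_add[of a "b - a" X] by (metis le_add_diff_inverse prefixI)

lemma runP:
  "X \<in> {1, -1} \<Longrightarrow> \<forall>n\<in>set ns. n \<noteq> 0 \<Longrightarrow> prefix (replicate l X) (lw p ns)
   \<Longrightarrow> prefix (replicate (l - 1) X) ns"
proof (induction ns arbitrary: p l)
  case Nil
  then show ?case by simp
next
  case (Cons n r)
  show ?case
  proof (cases "l \<le> 1")
    case True then show ?thesis by simp
  next
    case False
    define l' where "l' = l - 2"
    have l: "l = Suc (Suc l')" using False by (simp add: l'_def)
    have X0: "X \<noteq> 0" using Cons.prems by auto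
    have pre: "prefix (X # X # replicate l' X) (sep p n @ fw n @ lw n r)" using Cons.prems(3) l by simp
    have sp: "sep p n = []"
    proof (rule ccontr)
      assume "sep p n \<noteq> []" then have "sep p n = [0]" by (simp add: sep_def split: if_splits)
      then show False using pre X0 by simp
    qed
    have k: "nat \<bar>n\<bar> - 1 = 0"
    proof (rule ccontr)
      assume "nat \<bar>n\<bar> - 1 \<noteq> 0"
      then obtain k where "nat \<bar>n\<bar> - 1 = Suc k" by (cases "nat \<bar>n\<bar> - 1") auto
      then have "fw n = sg n # 0 # fl (sg n) k" by (simp add: fw_def)
      then show False using pre sp X0 by simp
    qed
    then have fwn: "fw n = [sg n]" by (simp add: fw_def)
    have sgX: "sg n = X" using pre sp fwn by simp
    have nX: "n = X" using k sgX Cons.prems(2) by (auto simp: sg_def)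
    have "prefix (replicate (Suc l') X) (lw n r)" using pre sp fwn sgX by simp
    then have "prefix (replicate l' X) r" using Cons.IH[of "Suc l'" n] Cons.prems by simp
    then show ?thesis using l nX by simp
  qed
qed

lemma runS:
  "X \<in> {1, -1} \<Longrightarrow> \<forall>n\<in>set ns. n \<noteq> 0 \<Longrightarrow> sublist (replicate l X) (lw p ns)
   \<Longrightarrow> sublist (replicate (l - 2) X) ns"
proof (induction ns arbitrary: p l)
  case Nil
  then show ?case by simp
next
  case (Cons n r)
  have X0: "X \<noteq> 0" using Cons.prems by auto
  have "sublist (replicate l X) ((sep p n @ fw n) @ lw n r)" using Cons.prems(3) by simp
  then consider "sublist (replicate l X) (sep p n @ fw n)" | "sublist (replicate l X) (lw n r)"
    | xs1 xs2 where "replicate l X = xs1 @ xs2" "suffix xs1 (sep p n @ fw n)" "prefix xs2 (lw n r)"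
    unfolding sublist_append by blast
  then show ?case
  proof cases
    case 1
    then have "l < 2" using rep_sub2 noXX_seg[OF X0] by (meson not_less)
    then show ?thesis by simp
  next
    case 2
    then have "sublist (replicate (l - 2) X) r" using Cons.IH Cons.prems by simp
    then show ?thesis by (auto simp: sublist_Cons_right)
  next
    case 3
    have "\<forall>y\<in>set xs1. y = X"
    proof
      fix y assume "y \<in> set xs1" then have "y \<in> set (replicate l X)" using 3(1) by simp
      then show "y = X" by simp
    qed
    then have s1: "xs1 = replicate (length xs1) X" using replicate_length_same by metis
    have "\<forall>y\<in>set xs2. y = X"
    proof
      fix y assume "y \<in> set xs2" then have "y \<in> set (replicate l X)" using 3(1) by simp
      then show "y = X" by simp
    qed
    then have s2: "xs2 = replicate (length xs2) X" using replicate_length_same by metis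
    have "length xs1 < 2"
    proof (rule ccontr)
      assume "\<not> length xs1 < 2"
      then have "sublist [X, X] (sep p n @ fw n)" using rep_sub2[of "length xs1" X] s1 3(2) by simp
      then show False using noXX_seg[OF X0] by blast
    qed
    have ll: "l = length xs1 + length xs2" using 3(1) by (metis length_append length_replicate)
    have "prefix (replicate (length xs2 - 1) X) r" using runP[OF Cons.prems(1), of r "length xs2" n] Cons.prems 3(3) s2 by simp
    moreover have "prefix (replicate (l - 2) X) (replicate (length xs2 - 1) X)"
      using ll \<open>length xs1 < 2\<close> by (intro pre_rep) linarith
    ultimately have "prefix (replicate (l - 2) X) r" using prefix_order.order_trans by blast
    then show ?thesis by (auto simp: sublist_Cons_right)
  qed
qed

lemma sublist_expand: "c \<in> set S \<Longrightarrow> sublist (expand c) (concat (map expand S))"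
proof -
  assume "c \<in> set S"
  then obtain ps ss where "S = ps @ c # ss" by (meson split_list)
  then show ?thesis by (auto simp: sublist_def)
qed

lemma adm_run:
  assumes "admissible q ns" "sublist (replicate m e) ns" "e \<in> {1, -1}"
  shows "real m < real q / 2 - 2"
proof -
  obtain ps ss where ns: "ns = ps @ replicate m e @ ss" using assms(2) by (auto simp: sublist_def)
  have "\<forall>t<m. ns ! ((length ps + t) mod length ns) = e"
    using ns by (auto simp: nth_append)
  then show ?thesis using assms(1,3) unfolding admissible_def by blast
qed

lemma fl_Suc_app: "fl X (Suc k) = fl X k @ [0, X]"
  by (induction k) auto

lemma fl_mono: "a < b \<Longrightarrow> \<exists>C. fl X b = fl X a @ 0 # X # C"
proof (induction b)
  case 0 then show ?case by simp
next
  case (Suc b)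
  show ?case
  proof (cases "a = b")
    case True then show ?thesis by (intro exI[of _ "[]"]) (simp only: fl_Suc_app)
  next
    case False
    then obtain C where C: "fl X b = fl X a @ 0 # X # C" using Suc by auto
    show ?thesis by (intro exI[of _ "C @ [0, X]"]) (simp only: fl_Suc_app C append.assoc append_Cons)
  qed
qed

lemma length_fl: "length (fl X k) = 2 * k + 1"
  by (induction k) auto

lemma nth_fl: "i < length (fl X k) \<Longrightarrow> fl X k ! i = (if even i then X else 0)"
proof (induction k arbitrary: i)
  case 0 then show ?case by simp
next
  case (Suc k)
  show ?case
  proof (cases i)
    case 0 then show ?thesis by simp
  next
    case (Suc j)
    note j = this
    show ?thesis
    proof (cases j)
      case 0 then show ?thesis using j by simp
    next
      case (Suc j')
      then show ?thesis using j Suc.IH[of j'] Suc.prems by auto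
    qed
  qed
qed

lemma fw_ne: "fw n \<noteq> []" by (simp add: fw_def fl_ne)
lemma hd_fw_app: "hd (fw n @ A) = sg n" by (simp add: fw_def fl_ne hd_fl)

lemma lw_no_0X: "sg n = X \<Longrightarrow> \<forall>m\<in>set r. m \<noteq> 0 \<Longrightarrow> lw n r \<noteq> 0 # X # A"
proof (cases r)
  case (Cons m r')
  assume a: "sg n = X" "\<forall>m\<in>set r. m \<noteq> 0"
  show ?thesis
  proof (cases "(0 < n) = (0 < m)")
    case True
    then have "hd (lw n r) = sg m" using Cons hd_lw[of n m r'] by (simp del: lw.simps)
    then show ?thesis using sg_ne0[of m] by auto
  next
    case False
    then have "lw n r = 0 # fw m @ lw m r'" using Cons by (simp add: sep_def)
    moreover have "hd (fw m) = sg m" by (simp add: fw_def hd_fl)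
    moreover have "sg m \<noteq> X" using a False by (auto simp: sg_def)
    ultimately show ?thesis by (cases "fw m") (auto simp: fw_def fl_ne)
  qed
qed simp

lemma lw_inj:
  "(0 < p) = (0 < p') \<Longrightarrow> \<forall>n\<in>set ns. n \<noteq> 0 \<Longrightarrow> \<forall>n\<in>set ms. n \<noteq> 0 \<Longrightarrow> lw p ns = lw p' ms \<Longrightarrow> ns = ms"
proof (induction ns arbitrary: p p' ms)
  case Nil
  then show ?case using lw_ne by (metis lw.simps(1))
next
  case (Cons n r)
  obtain m r' where ms: "ms = m # r'"
    using Cons.prems lw_ne[of "n # r" p] by (cases ms) auto
  have n0: "n \<noteq> 0" "m \<noteq> 0" using Cons.prems ms by auto
  have eq: "sep p n @ fw n @ lw n r = sep p' m @ fw m @ lw m r'" using Cons.prems(4) ms by simp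
  show ?case
  proof (cases "(0 < n) = (0 < m)")
    case True
    have "sep p n = sep p' m" using True Cons.prems(1) by (simp add: sep_def)
    then have eq2: "fl (sg n) (nat \<bar>n\<bar> - 1) @ lw n r = fl (sg n) (nat \<bar>m\<bar> - 1) @ lw m r'"
      using eq True by (simp add: fw_def sg_def)
    have sgm: "sg m = sg n" using True by (simp add: sg_def)
    have ab: "nat \<bar>n\<bar> - 1 = nat \<bar>m\<bar> - 1"
    proof (rule ccontr)
      assume ne: "nat \<bar>n\<bar> - 1 \<noteq> nat \<bar>m\<bar> - 1"
      show False
      proof (cases "nat \<bar>n\<bar> - 1 < nat \<bar>m\<bar> - 1")
        case True
        then obtain C where "fl (sg n) (nat \<bar>m\<bar> - 1) = fl (sg n) (nat \<bar>n\<bar> - 1) @ 0 # sg n # C"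
          using fl_mono by blast
        then have "lw n r = 0 # sg n # C @ lw m r'" using eq2 by simp
        then show False using lw_no_0X[of n "sg n" r] Cons.prems(2) by simp
      next
        case False
        then have "nat \<bar>m\<bar> - 1 < nat \<bar>n\<bar> - 1" using ne by simp
        then obtain C where "fl (sg n) (nat \<bar>n\<bar> - 1) = fl (sg n) (nat \<bar>m\<bar> - 1) @ 0 # sg n # C"
          using fl_mono by blast
        then have "lw m r' = 0 # sg m # C @ lw n r" using eq2 sgm by simp
        then show False using lw_no_0X[of m "sg m" r'] Cons.prems(3) ms by simp
      qed
    qed
    then have "n = m" using n0 True by (auto simp: sg_def)
    moreover then have "lw n r = lw m r'" using eq2 by simp
    ultimately show ?thesis using Cons.IH[of n m r'] Cons.prems ms by simp
  next
    case False
    have h: "hd (fw n @ lw n r) \<noteq> 0" "hd (fw m @ lw m r') \<noteq> 0"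
      by (simp_all add: hd_fw_app sg_ne0)
    have "sep p n = [] \<and> sep p' m = [0] \<or> sep p n = [0] \<and> sep p' m = []"
      using False Cons.prems(1) by (auto simp: sep_def)
    then show ?thesis
    proof
      assume "sep p n = [] \<and> sep p' m = [0]"
      then have "fw n @ lw n r = 0 # (fw m @ lw m r')" using eq by simp
      then show ?thesis using h(1) by (metis list.sel(1))
    next
      assume "sep p n = [0] \<and> sep p' m = []"
      then have "fw m @ lw m r' = 0 # (fw n @ lw n r)" using eq by simp
      then show ?thesis using h(2) by (metis list.sel(1))
    qed
  qed
qed

lemma LW_sign:
  assumes "ns \<noteq> []" "\<forall>n\<in>set ns. n \<noteq> 0"
  shows "(0 < last ns) \<longleftrightarrow> (if hd (LW ns) = 0 then LW ns ! 1 < 0 else 0 < hd (LW ns))"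
proof -
  obtain n r where ns: "ns = n # r" using assms by (cases ns) auto
  have n0: "n \<noteq> 0" using assms ns by auto
  have L: "LW ns = sep (last ns) n @ fw n @ lw n r" using ns by (simp add: LW_def)
  show ?thesis
  proof (cases "(0 < last ns) = (0 < n)")
    case True
    then have "hd (LW ns) = sg n" using L by (simp add: sep_def hd_fw_app)
    then show ?thesis using True n0 by (auto simp: sg_def)
  next
    case False
    then have "LW ns = 0 # fw n @ lw n r" using L by (simp add: sep_def)
    moreover have "fw n = sg n # tl (fw n)" by (metis fw_ne hd_fw_app append_Nil2 list.collapse)
    ultimately have "hd (LW ns) = 0" "LW ns ! 1 = sg n" by (metis list.sel(1), metis append_Cons nth_Cons_0 nth_Cons_Suc One_nat_def)
    then show ?thesis using False n0 by (auto simp: sg_def)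
  qed
qed

lemma LW_inj: "ns \<noteq> [] \<Longrightarrow> ms \<noteq> [] \<Longrightarrow> \<forall>n\<in>set ns. n \<noteq> 0 \<Longrightarrow> \<forall>n\<in>set ms. n \<noteq> 0 \<Longrightarrow> LW ns = LW ms \<Longrightarrow> ns = ms"
proof -
  assume a: "ns \<noteq> []" "ms \<noteq> []" "\<forall>n\<in>set ns. n \<noteq> 0" "\<forall>n\<in>set ms. n \<noteq> 0" "LW ns = LW ms"
  have "(0 < last ns) = (0 < last ms)" using LW_sign[OF a(1,3)] LW_sign[OF a(2,4)] a(5) by simp
  then show ?thesis using lw_inj[of "last ns" "last ms" ns ms] a by (simp add: LW_def)
qed

lemma lw_append: "lw p (xs @ ys) = lw p xs @ lw (last (p # xs)) ys"
  by (induction xs arbitrary: p) auto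

lemma LW_rot1: "LW (r @ [n]) = rotate (length (sep (last (n # r)) n @ fw n)) (LW (n # r))"
proof -
  have "LW (r @ [n]) = lw n r @ sep (last (n # r)) n @ fw n"
    by (simp add: LW_def lw_append)
  moreover have "LW (n # r) = (sep (last (n # r)) n @ fw n) @ lw n r" by (simp add: LW_def)
  ultimately show ?thesis by (simp only: rotate_append)
qed

lemma seg_lemma:
  assumes "0 < r" "r < length (sep p n @ fw n)" "(sep p n @ fw n) ! r = 0"
  shows "r + 1 < length (sep p n @ fw n) \<and> (sep p n @ fw n) ! (r + 1) = (sep p n @ fw n) ! (r - 1)"
proof -
  define k where "k = nat \<bar>n\<bar> - 1"
  have fw: "fw n = fl (sg n) k" by (simp add: fw_def k_def)
  have s: "sg n \<noteq> 0" by (rule sg_ne0)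
  show ?thesis
  proof (cases "sep p n = []")
    case True
    have r: "r < 2 * k + 1" "fl (sg n) k ! r = 0" using assms True fw by (simp_all add: length_fl)
    then have "odd r" using nth_fl[of r "sg n" k] s by (auto simp: length_fl split: if_splits)
    then have "r \<noteq> 2 * k" by auto
    then have "r + 1 < 2 * k + 1" using r(1) by linarith
    then show ?thesis using True fw nth_fl[of "r + 1" "sg n" k] nth_fl[of "r - 1" "sg n" k] \<open>odd r\<close> assms(1)
      by (simp add: length_fl)
  next
    case False
    then have sp: "sep p n = [0]" by (simp add: sep_def split: if_splits)
    have r: "r - 1 < 2 * k + 1" "fl (sg n) k ! (r - 1) = 0" using assms sp fw by (simp_all add: length_fl)
    then have "odd (r - 1)" using nth_fl[of "r - 1" "sg n" k] s by (auto simp: length_fl split: if_splits)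
    then have r2: "2 \<le> r" using assms(1) by (cases r) (auto simp: Suc_le_eq odd_pos)
    have "r - 1 \<noteq> 2 * k"
    proof
      assume "r - 1 = 2 * k" then have "even (r - 1)" by simp
      then show False using \<open>odd (r - 1)\<close> by simp
    qed
    then have "r < 2 * k + 1" using r(1) r2 by linarith
    moreover have "even r" "even (r - 2)" using \<open>odd (r - 1)\<close> r2 by (auto simp: even_diff_nat)
    ultimately show ?thesis using sp fw nth_fl[of r "sg n" k] nth_fl[of "r - 2" "sg n" k] assms(1) r2
      by (simp add: length_fl nth_Cons' numeral_2_eq_2)
  qed
qed

lemma LW_norm:
  assumes "ms \<noteq> []" "\<forall>m\<in>set ms. m \<noteq> 0" "hd ms < 0" "0 < last ms"
  shows "hd (LW ms) = 0" "LW ms ! 1 = -1" "last (LW ms) = 1"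
proof -
  obtain m r where ms: "ms = m # r" using assms by (cases ms) auto
  have L: "LW ms = 0 # (fw m @ lw m r)" using ms assms by (simp add: LW_def sep_def)
  show "hd (LW ms) = 0" using L by simp
  show "LW ms ! 1 = -1" using L hd_fw_app[of m "lw m r"] fw_ne[of m] assms ms
    by (cases "fw m @ lw m r") (auto simp: sg_def)
  show "last (LW ms) = 1" using last_lw[of ms "last ms"] assms by (simp add: LW_def sg_def)
qed

lemma rot_align:
  assumes ms: "ms \<noteq> []" "\<forall>m\<in>set ms. m \<noteq> 0" "hd ms < 0" "0 < last ms"
  shows "ns \<noteq> [] \<Longrightarrow> \<forall>n\<in>set ns. n \<noteq> 0 \<Longrightarrow> r < length (LW ns) \<Longrightarrow> LW ms = rotate r (LW ns)
    \<Longrightarrow> \<exists>j. ms = rotate j ns"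
proof (induction r arbitrary: ns rule: less_induct)
  case (less r ns)
  show ?case
  proof (cases "r = 0")
    case True
    then have "LW ms = LW ns" using less.prems by simp
    then have "ms = ns" using LW_inj[of ms ns] ms less.prems by blast
    then show ?thesis by (intro exI[of _ 0]) simp
  next
    case False
    obtain n t where ns: "ns = n # t" using less.prems by (cases ns) auto
    define seg where "seg = sep (last ns) n @ fw n"
    define d where "d = length seg"
    have L: "LW ns = seg @ lw n t" using ns by (simp add: LW_def seg_def)
    have rot: "LW (t @ [n]) = rotate d (LW ns)" using LW_rot1[of t n] ns by (simp add: d_def seg_def)
    have d1: "1 \<le> d" using fw_ne[of n] by (simp add: d_def seg_def Suc_le_eq)
    show ?thesis
    proof (cases "d \<le> r")
      case True
      have "LW ms = rotate (r - d) (LW (t @ [n]))" using less.prems(4) rot True by (simp add: rotate_rotate)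
      moreover have "r - d < r" using d1 False by simp
      moreover have "r - d < length (LW (t @ [n]))" using rot less.prems(3) by simp
      moreover have "t @ [n] \<noteq> []" "\<forall>x\<in>set (t @ [n]). x \<noteq> 0" using less.prems ns by auto
      ultimately obtain j where "ms = rotate j (t @ [n])" using less.IH by blast
      moreover have "t @ [n] = rotate 1 ns" using ns by simp
      ultimately have "ms = rotate (j + 1) ns" by (simp only: rotate_rotate)
      then show ?thesis by blast
    next
      case False
      then have rd: "0 < r" "r < d" using \<open>r \<noteq> 0\<close> by auto
      define len where "len = length (LW ns)"
      have dl: "d \<le> len" using L by (simp add: len_def d_def)
      have M: "hd (LW ms) = 0" "LW ms ! 1 = -1" "last (LW ms) = 1" using LW_norm ms by auto
      have lenM: "length (LW ms) = len" using less.prems(4) by (simp add: len_def)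
      have n0: "LW ms \<noteq> []" using lenM dl rd by auto
      have "LW ms ! 0 = LW ns ! r"
        using less.prems(4) nth_rotate[of 0 "LW ns" r] n0 rd dl by (simp add: len_def)
      then have "seg ! r = 0" using M(1) n0 L rd by (simp add: hd_conv_nth nth_append d_def)
      then have sl: "r + 1 < d" "seg ! (r + 1) = seg ! (r - 1)"
        using seg_lemma[of r "last ns" n] rd by (simp_all add: seg_def d_def)
      have "LW ms ! 1 = LW ns ! (r + 1)"
        using less.prems(4) nth_rotate[of 1 "LW ns" r] sl dl by (simp add: len_def)
      then have e1: "LW ms ! 1 = seg ! (r + 1)" using L sl by (simp add: nth_append d_def)
      have "r + (len - 1) = (r - 1) + len" using rd dl by simp
      then have "(r + (len - 1)) mod len = (r - 1) mod len" by (simp only: mod_add_self2)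
      also have "\<dots> = r - 1" using rd dl by simp
      finally have "(r + (len - 1)) mod len = r - 1" .
      then have "last (LW ms) = LW ns ! (r - 1)"
        using less.prems(4) nth_rotate[of "len - 1" "LW ns" r] n0 lenM dl rd
        by (simp add: last_conv_nth len_def)
      then have e2: "last (LW ms) = seg ! (r - 1)" using L rd by (simp add: nth_append d_def less_imp_diff_less)
      show ?thesis using e1 e2 M sl by simp
    qed
  qed
qed

lemma concat_rotate:
  "concat (rotate n xs) = rotate (length (concat (take (n mod length xs) xs))) (concat xs)"
proof -
  define m where "m = n mod length xs"
  have "concat (rotate n xs) = concat (drop m xs) @ concat (take m xs)"
    by (simp add: rotate_drop_take m_def)
  moreover have "concat xs = concat (take m xs) @ concat (drop m xs)"
    by (metis append_take_drop_id concat_append)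
  ultimately show ?thesis by (simp add: m_def rotate_append)
qed

lemma exists_norm:
  assumes "admissible q ns"
  shows "\<exists>a. hd (rotate a ns) < 0 \<and> 0 < last (rotate a ns)"
proof -
  define k where "k = length ns"
  have ne: "ns \<noteq> []" and nz: "\<forall>n\<in>set ns. n \<noteq> 0" and ex: "\<exists>a\<in>set ns. \<exists>b\<in>set ns. a > 0 \<and> b < 0"
    using assms by (auto simp: admissible_def)
  have k0: "0 < k" using ne by (simp add: k_def)
  have "\<exists>i<k. ns ! i > 0 \<and> ns ! ((i + 1) mod k) < 0"
  proof (rule ccontr)
    assume "\<not> ?thesis"
    then have step: "\<And>i. i < k \<Longrightarrow> ns ! i > 0 \<Longrightarrow> ns ! ((i + 1) mod k) > 0"
      using nz k0 by (metis k_def linorder_neqE_linordered_idom mod_less_divisor nth_mem)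
    obtain a b where ab: "a \<in> set ns" "b \<in> set ns" "a > 0" "b < 0" using ex by blast
    obtain ja where ja: "ja < k" "ns ! ja = a" using ab(1) by (metis in_set_conv_nth k_def)
    obtain jb where jb: "jb < k" "ns ! jb = b" using ab(2) by (metis in_set_conv_nth k_def)
    have all: "ns ! ((ja + t) mod k) > 0" for t
    proof (induction t)
      case 0 then show ?case using ja ab by simp
    next
      case (Suc t)
      have "ns ! (((ja + t) mod k + 1) mod k) > 0" using step[OF _ Suc] k0 by simp
      moreover have "((ja + t) mod k + 1) mod k = (ja + Suc t) mod k" by (simp add: mod_Suc_eq)
      ultimately show ?case by simp
    qed
    have "(ja + (jb + k - ja)) mod k = jb" using ja jb by simp
    then show False using all[of "jb + k - ja"] jb ab by simp
  qed
  then obtain i where i: "i < k" "ns ! i > 0" "ns ! ((i + 1) mod k) < 0" by blast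
  define a where "a = (i + 1) mod k"
  have "hd (rotate a ns) = ns ! a"
    using ne k0 by (simp add: hd_conv_nth nth_rotate k_def a_def)
  moreover have "last (rotate a ns) = ns ! i"
  proof -
    have "last (rotate a ns) = ns ! ((a + (k - 1)) mod k)"
      using ne k0 by (simp add: last_conv_nth nth_rotate k_def)
    moreover have "(a + (k - 1)) mod k = (i + 1 + (k - 1)) mod k" by (simp add: a_def mod_add_left_eq)
    moreover have "i + 1 + (k - 1) = i + k" using k0 by simp
    ultimately show ?thesis using i by simp
  qed
  ultimately show ?thesis using i by (intro exI[of _ a]) (simp add: a_def)
qed

lemma adm_rotate: "admissible q ns \<Longrightarrow> admissible q (rotate a ns)"
proof -
  assume a: "admissible q ns"
  define k where "k = length ns"
  have k0: "0 < k" using a by (simp add: admissible_def k_def)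
  have "\<forall>e\<in>{1, -1}. \<forall>i m. (\<forall>t<m. rotate a ns ! ((i + t) mod length (rotate a ns)) = e)
         \<longrightarrow> real m < real q / 2 - 2"
  proof (intro ballI allI impI)
    fix e i m assume e: "e \<in> {1, -1::int}" and h: "\<forall>t<m. rotate a ns ! ((i + t) mod length (rotate a ns)) = e"
    have "\<forall>t<m. ns ! ((a + i + t) mod length ns) = e"
    proof (intro allI impI)
      fix t assume "t < m"
      then have "rotate a ns ! ((i + t) mod k) = e" using h by (simp add: k_def)
      moreover have "rotate a ns ! ((i + t) mod k) = ns ! ((a + (i + t) mod k) mod k)"
        using k0 by (simp add: nth_rotate k_def)
      moreover have "(a + (i + t) mod k) mod k = (a + i + t) mod k" by (simp add: mod_add_right_eq add.assoc)
      ultimately show "ns ! ((a + i + t) mod length ns) = e" by (simp add: k_def)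
    qed
    then show "real m < real q / 2 - 2" using a e unfolding admissible_def by blast
  qed
  then show ?thesis using a by (simp add: admissible_def)
qed

lemma rot_conj: "\<exists>g\<in>hecke_group q. g ** hecke_word q ns = hecke_word q (rotate r ns) ** g"
proof -
  define m where "m = r mod length ns"
  have "rotate r ns = drop m ns @ take m ns" by (simp add: rotate_drop_take m_def)
  moreover have "ns = take m ns @ drop m ns" by simp
  ultimately have "hecke_word q (drop m ns) ** hecke_word q ns = hecke_word q (rotate r ns) ** hecke_word q (drop m ns)"
    by (metis hw_append matrix_mul_assoc)
  then show ?thesis using hw_H by blast
qed

lemma rot_inv: "\<exists>c. rotate c (rotate a xs) = xs"
proof -
  define k where "k = length xs"
  show ?thesis
  proof (cases "k = 0")
    case True then show ?thesis by (simp add: k_def)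
  next
    case False
    have "(k - a mod k + a) mod k = 0"
    proof -
      have x: "a mod k \<le> k" using False by (simp add: mod_le_divisor)
      have e: "a = a mod k + k * (a div k)" by simp
      have "k - a mod k + a = k + k * (a div k)" using x e by linarith
      then show ?thesis by simp
    qed
    then show ?thesis by (intro exI[of _ "k - a mod k"]) (simp add: rotate_rotate k_def)
  qed
qed

definition Rc :: "nat \<Rightarrow> mat2 \<Rightarrow> mat2 \<Rightarrow> bool" where
  "Rc q A B \<longleftrightarrow> (\<exists>g\<in>hecke_group q. g ** A \<simeq> B ** g)"

lemma Rc_trans: "Rc q A B \<Longrightarrow> Rc q B C \<Longrightarrow> Rc q A C"
proof -
  assume "Rc q A B" "Rc q B C"
  then obtain g1 g2 where g: "g1 \<in> hecke_group q" "g1 ** A \<simeq> B ** g1" "g2 \<in> hecke_group q" "g2 ** B \<simeq> C ** g2"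
    by (auto simp: Rc_def)
  have "(g2 ** g1) ** A = g2 ** (g1 ** A)" by (simp add: matrix_mul_assoc)
  also have "\<dots> \<simeq> g2 ** (B ** g1)" by (intro sim_multl g(2))
  also have "\<dots> = (g2 ** B) ** g1" by (simp add: matrix_mul_assoc)
  also have "\<dots> \<simeq> (C ** g2) ** g1" by (intro sim_multr g(4))
  also have "\<dots> = C ** (g2 ** g1)" by (simp add: matrix_mul_assoc)
  finally show ?thesis using H_mult g by (auto simp: Rc_def)
qed

lemma Rc_rot: "Rc q (hecke_word q ns) (hecke_word q (rotate r ns))"
proof -
  obtain g where "g \<in> hecke_group q" "g ** hecke_word q ns = hecke_word q (rotate r ns) ** g"
    using rot_conj by blast
  then show ?thesis unfolding Rc_def by (intro bexI[of _ g]) simp_all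
qed

lemma conj_Rc: "conj_PSL q A B \<Longrightarrow> Rc q A B"
proof -
  assume "conj_PSL q A B"
  then obtain g where g: "g \<in> hecke_group q" "g ** A ** matrix_inv g \<simeq> B"
    by (auto simp: conj_PSL_def sim_def)
  have inv: "matrix_inv g ** g = mat 1" using inv_props[OF H_invertible[OF g(1)]] by simp
  have "g ** A = (g ** A ** matrix_inv g) ** g" by (simp add: matrix_mul_assoc[symmetric] inv)
  also have "\<dots> \<simeq> B ** g" by (intro sim_multr g(2))
  finally show ?thesis using g(1) by (auto simp: Rc_def)
qed

lemma conj_of_rot: "conj_PSL q (hecke_word q ns) (hecke_word q (rotate r ns))"
proof -
  obtain g where g: "g \<in> hecke_group q" "g ** hecke_word q ns = hecke_word q (rotate r ns) ** g"
    using rot_conj by blast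
  have inv: "g ** matrix_inv g = mat 1" using inv_props[OF H_invertible[OF g(1)]] by simp
  have "g ** hecke_word q ns ** matrix_inv g = hecke_word q (rotate r ns)"
    using g(2) by (simp add: matrix_mul_assoc[symmetric] inv)
  then show ?thesis using g(1) by (auto simp: conj_PSL_def)
qed

lemma last_concat_expand: "S \<noteq> [] \<Longrightarrow> last (concat (map expand S)) = last (expand (last S))"
proof -
  assume "S \<noteq> []"
  then obtain S0 c where S: "S = S0 @ [c]" by (cases S rule: rev_cases) auto
  have "expand c \<noteq> []" by (simp add: expand_def)
  then show ?thesis using S by simp
qed

context hq begin

lemma bound_syl:
  assumes adm: "admissible q ns" and S: "concat (map expand S) = LW ns" and c: "c \<in> set S"
  shows "2 * \<bar>c\<bar> < int q"
proof (cases "c = 0")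
  case True then show ?thesis using q3 by simp
next
  case False
  have nz: "\<forall>n\<in>set ns. n \<noteq> 0" using adm by (simp add: admissible_def)
  have "sublist (replicate (nat \<bar>c\<bar>) (sg c)) (lw (last ns) ns)"
    using sublist_expand[OF c] S False by (simp add: expand_def LW_def)
  moreover have X: "sg c \<in> {1, -1}" by (simp add: sg_def)
  ultimately have "sublist (replicate (nat \<bar>c\<bar> - 2) (sg c)) ns" using runS nz by blast
  then have r: "real (nat \<bar>c\<bar> - 2) < real q / 2 - 2" using adm_run[OF adm _ X] by blast
  show ?thesis
  proof (cases "2 \<le> nat \<bar>c\<bar>")
    case True
    then have "real (nat \<bar>c\<bar> - 2) = real (nat \<bar>c\<bar>) - 2" by (simp add: of_nat_diff)
    moreover have "real (nat \<bar>c\<bar>) = real_of_int \<bar>c\<bar>" by simp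
    ultimately have "real_of_int (2 * \<bar>c\<bar>) < real_of_int (int q)" using r by simp
    then show ?thesis by (simp only: of_int_less_iff)
  next
    case False
    then have "\<bar>c\<bar> \<le> 1" by simp
    moreover have "real q > 4" using r False by simp
    ultimately show ?thesis by linarith
  qed
qed

lemma syl_data:
  assumes adm: "admissible q ns" and hn: "hd ns < 0" "0 < last ns"
  shows "\<exists>S. concat (map expand S) = LW ns \<and> CR (map phi S) \<and> (\<forall>c\<in>set S. 2 * \<bar>c\<bar> < int q)
     \<and> ev (map phi S) \<simeq> hecke_word q ns"
proof -
  have ne: "ns \<noteq> []" and nz: "\<forall>n\<in>set ns. n \<noteq> 0" using adm by (auto simp: admissible_def)
  have g: "gd (LW ns)" using gd_lw[OF nz] by (simp add: LW_def)
  have Lne: "LW ns \<noteq> []" using lw_ne[OF ne] by (simp add: LW_def)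
  obtain S where S: "concat (map expand S) = LW ns" "ialt S" "S \<noteq> []" "hd S = 0 \<longleftrightarrow> hd (LW ns) = 0"
    using syl_exists[OF g] Lne by blast
  have bd: "\<forall>c\<in>set S. 2 * \<bar>c\<bar> < int q" using bound_syl[OF adm S(1)] by blast
  then have bd1: "\<forall>c\<in>set S. \<bar>c\<bar> < int q" by force
  have LN: "hd (LW ns) = 0" "last (LW ns) = 1" using LW_norm[OF ne nz hn] by auto
  have hS: "hd S = 0" using S(4) LN by simp
  have lS: "last S \<noteq> 0"
  proof
    assume "last S = 0"
    then have "last (LW ns) = 0" using last_concat_expand[OF S(3)] S(1) by (simp add: expand_def)
    then show False using LN by simp
  qed
  have lSq: "\<bar>last S\<bar> < int q" using bd1 S(3) by simp
  define W where "W = map phi S"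
  have rW: "red W" unfolding W_def red_def using alt_map_phi[OF bd1 S(2)] phi_lt by auto
  have hW: "hd W = 0" using hS S(3) by (simp add: W_def hd_map phi_def)
  have lW: "last W \<noteq> 0" using lS S(3) phi_0[OF lSq] by (simp add: W_def last_map)
  have "2 \<le> length W"
  proof (rule ccontr)
    assume "\<not> 2 \<le> length W"
    moreover have "W \<noteq> []" using S(3) by (simp add: W_def)
    ultimately obtain x where "W = [x]" by (cases W; cases "tl W") auto
    then show False using hW lW by simp
  qed
  then have "CR W" using rW hW lW by (simp add: CR_def)
  moreover have "ev W \<simeq> hecke_word q ns"
  proof -
    have "ev W \<simeq> evL (concat (map expand S))" unfolding W_def by (rule ev_map_phi[OF bd1])
    also have "\<dots> = evL (LW ns)" using S(1) by simp
    also have "\<dots> \<simeq> hecke_word q ns" using LW_ev[OF ne nz hn(2)] .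
    finally show ?thesis .
  qed
  ultimately show ?thesis using S(1) bd unfolding W_def by blast
qed

lemma hard:
  assumes an: "admissible q ns" "hd ns < 0" "0 < last ns"
    and am: "admissible q ms" "hd ms < 0" "0 < last ms"
    and R: "Rc q (hecke_word q ns) (hecke_word q ms)"
  shows "\<exists>j. ms = rotate j ns"
proof -
  obtain S where S: "concat (map expand S) = LW ns" "CR (map phi S)" "\<forall>c\<in>set S. 2 * \<bar>c\<bar> < int q"
    "ev (map phi S) \<simeq> hecke_word q ns" using syl_data[OF an] by blast
  obtain S' where S': "concat (map expand S') = LW ms" "CR (map phi S')" "\<forall>c\<in>set S'. 2 * \<bar>c\<bar> < int q"
    "ev (map phi S') \<simeq> hecke_word q ms" using syl_data[OF am] by blast
  obtain g where g: "g \<in> hecke_group q" "g ** hecke_word q ns \<simeq> hecke_word q ms ** g"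
    using R by (auto simp: Rc_def)
  obtain x where x: "red x" "g \<simeq> ev x" using H_word[OF g(1)] by blast
  have "ev x ** ev (map phi S) \<simeq> g ** hecke_word q ns" by (intro sim_mult sim_sym[OF x(2)] S(4))
  also have "\<dots> \<simeq> hecke_word q ms ** g" by (rule g(2))
  also have "\<dots> \<simeq> ev (map phi S') ** ev x" by (intro sim_mult sim_sym[OF S'(4)] x(2))
  finally obtain r where r: "map phi S' = rotate r (map phi S)"
    using conj_rot[OF x(1) S(2) S'(2)] by blast
  then have "map phi S' = map phi (rotate r S)" by (simp add: rotate_map)
  moreover have "inj_on phi (set S' \<union> set (rotate r S))"
    using S(3) S'(3) phi_inj by (auto simp: inj_on_def)
  ultimately have SS: "S' = rotate r S" using inj_on_map_eq_map by blast
  define r' where "r' = length (concat (take (r mod length (map expand S)) (map expand S)))"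
  have "LW ms = concat (rotate r (map expand S))" using S'(1) SS by (simp add: rotate_map)
  also have "\<dots> = rotate r' (LW ns)" using S(1) by (simp add: concat_rotate r'_def)
  also have "\<dots> = rotate (r' mod length (LW ns)) (LW ns)" by (rule rotate_conv_mod)
  finally have e: "LW ms = rotate (r' mod length (LW ns)) (LW ns)" .
  have ne: "ns \<noteq> []" "\<forall>n\<in>set ns. n \<noteq> 0" "ms \<noteq> []" "\<forall>n\<in>set ms. n \<noteq> 0"
    using an am by (auto simp: admissible_def)
  have "LW ns \<noteq> []" using lw_ne[OF ne(1)] by (simp add: LW_def)
  then have "r' mod length (LW ns) < length (LW ns)" by simp
  then show ?thesis using rot_align[OF ne(3,4) am(2,3) ne(1,2) _ e] by blast
qed

end

theorem lemma2p2:
  fixes q :: nat and ns ms :: "int list"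
  assumes "q \<ge> 3" and "admissible q ns" and "admissible q ms"
  shows "conj_PSL q (hecke_word q ns) (hecke_word q ms) \<longleftrightarrow> (\<exists>r. ms = rotate r ns)"
proof
  assume c: "conj_PSL q (hecke_word q ns) (hecke_word q ms)"
  have H: "hq q" using assms(1) by (simp add: hq_def)
  obtain a where a: "hd (rotate a ns) < 0" "0 < last (rotate a ns)" using exists_norm[OF assms(2)] by blast
  obtain b where b: "hd (rotate b ms) < 0" "0 < last (rotate b ms)" using exists_norm[OF assms(3)] by blast
  obtain c1 where c1: "rotate c1 (rotate a ns) = ns" using rot_inv by blast
  obtain c2 where c2: "rotate c2 (rotate b ms) = ms" using rot_inv by blast
  have "Rc q (hecke_word q (rotate a ns)) (hecke_word q ns)" using Rc_rot[of q "rotate a ns" c1] c1 by simp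
  moreover have "Rc q (hecke_word q ns) (hecke_word q ms)" using conj_Rc[OF c] .
  moreover have "Rc q (hecke_word q ms) (hecke_word q (rotate b ms))" by (rule Rc_rot)
  ultimately have "Rc q (hecke_word q (rotate a ns)) (hecke_word q (rotate b ms))" using Rc_trans by blast
  then obtain j where "rotate b ms = rotate j (rotate a ns)"
    using hq.hard[OF H adm_rotate[OF assms(2)] a adm_rotate[OF assms(3)] b] by blast
  then have "ms = rotate (c2 + (j + a)) ns" using c2 by (metis rotate_rotate)
  then show "\<exists>r. ms = rotate r ns" by blast
next
  assume "\<exists>r. ms = rotate r ns"
  then show "conj_PSL q (hecke_word q ns) (hecke_word q ms)" using conj_of_rot by blast
qed

end
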